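(* In $\mathrm{F}_H$, if $\emptyset \vdash e : T$, then either $e \longrightarrow e'$ for some $e'$, or $e$ is a value, or $e = \Uparrow\ell$ for some blame label $\ell$.
   Context: Syntax of $\mathrm{F}_H$. Base types $B$ include $\mathsf{Bool}$; each $B$ has a set $\mathcal{K}_B$ of constants ($\mathcal{K}_{\mathsf{Bool}}=\{\mathsf{true},\mathsf{false}\}$). Primitive operations $\mathtt{op}$ have denotations $[\![\mathtt{op}]\!]$ (partial functions from tuples of constants to constants). Types $T ::= B \mid \alpha \mid x{:}T_1\to T_2 \mid \forall\alpha.T \mid \{x{:}T \mid e\}$; $T_1\to T_2$ abbreviates $x{:}T_1\to T_2$ with $x$ not free in $T_2$. Values $v ::= k \mid \lambda x{:}T.e \mid \Lambda\alpha.e \mid \langle T_1\Rightarrow T_2\rangle^{\ell}$. Terms $e ::= v \mid x \mid \mathtt{op}(e_1,\dots,e_n) \mid e_1\,e_2 \mid e\,T \mid \langle\!\langle \{x{:}T_1\mid e_1\}, e_2\rangle\!\rangle^{\ell} \mid \langle \{x{:}T_1\mid e_1\}, e_2, v\rangle^{\ell} \mid \Uparrow\ell$. Substitution is capture-avoiding; $\mathsf{let}\ y{:}T=e_1\ \mathsf{in}\ e_2$ means $(\lambda y{:}T.e_2)\,e_1$. Semantics. Reduction $\rightsquigarrow$: $\mathtt{op}(k_1,\dots,k_n)\rightsquigarrow[\![\mathtt{op}]\!](k_1,\dots,k_n)$; $(\lambda x{:}T.e)\,v\rightsquigarrow e[v/x]$; $(\Lambda\alpha.e)\,T\rightsquigarrow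 e[T/\alpha]$; $\langle B\Rightarrow B\rangle^\ell v\rightsquigarrow v$; $\langle x{:}T_{11}\to T_{12}\Rightarrow x{:}T_{21}\to T_{22}\rangle^\ell v\rightsquigarrow \lambda x{:}T_{21}.\,\mathsf{let}\ y{:}T_{11}=\langle T_{21}\Rightarrow T_{11}\rangle^\ell x\ \mathsf{in}\ \langle T_{12}[y/x]\Rightarrow T_{22}\rangle^\ell (v\,y)$ ($y$ fresh); $\langle\forall\alpha.T_1\Rightarrow\forall\alpha.T_2\rangle^\ell v\rightsquigarrow\Lambda\alpha.\langle T_1\Rightarrow T_2\rangle^\ell(v\,\alpha)$; $\langle\{x{:}T_1\mid e_1\}\Rightarrow T_2\rangle^\ell v\rightsquigarrow\langle T_1\Rightarrow T_2\rangle^\ell v$; $\langle T_1\Rightarrow\{x{:}T_2\mid e_2\}\rangle^\ell v\rightsquigarrow\langle\!\langle\{x{:}T_2\mid e_2\},\langle T_1\Rightarrow T_2\rangle^\ell v\rangle\!\rangle^\ell$ if $T_1$ is not a refinement type; $\langle\!\langle\{x{:}T\mid e\},v\rangle\!\rangle^\ell\rightsquigarrow\langle\{x{:}T\mid e\},e[v/x],v\rangle^\ell$; $\langle\{x{:}T\mid e\},\mathsf{true},v\rangle^\ell\rightsquigarrow v$; $\langle\{x{:}T\mid e\},\mathsf{false},v\rangle^\ell\rightsquigarrow\Uparrow\ell$. Evaluation contexts $E ::= [\,] \mid \mathtt{op}(v_1,\dots,v_n,E,e_1,\dots,e_m) \mid E\,e \mid v\,E \mid E\,T \mid \langle\!\langle\{x{:}T\mid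 e\},E\rangle\!\rangle^\ell \mid \langle\{x{:}T\mid e\},E,v\rangle^\ell$; $E[e_1]\longrightarrow E[e_2]$ if $e_1\rightsquigarrow e_2$, and $E[\Uparrow\ell]\longrightarrow\Uparrow\ell$ if $E\ne[\,]$; $\longrightarrow^*$ is its reflexive–transitive closure. Typing. Contexts $\Gamma ::= \emptyset \mid \Gamma,x{:}T \mid \Gamma,\alpha$ (distinct variables). Each constant has a type $\mathsf{ty}(k)$ and each operation a type $\mathsf{ty}(\mathtt{op})=x_1{:}T_1\to\dots\to x_n{:}T_n\to T_0$. Let $\mathit{unref}(\{x{:}T\mid e\})=\mathit{unref}(T)$ and $\mathit{unref}(T)=T$ otherwise. Assumed: for $k\in\mathcal{K}_B$, $\mathit{unref}(\mathsf{ty}(k))=B$, $\emptyset\vdash\mathsf{ty}(k)$ and $\langle B\Rightarrow\mathsf{ty}(k)\rangle^\ell k\longrightarrow^* k$; each $\mathit{unref}(T_i)$ ($0\le i\le n$) for $\mathsf{ty}(\mathtt{op})$ is a base type, and if $k_i\in\mathcal{K}_{\mathit{unref}(T_i)}$ with $\langle \mathit{unref}(T_i)\Rightarrow T_i[k_1/x_1,\dots,k_{i-1}/x_{i-1}]\rangle^\ell k_i\longrightarrow^* k_i$ for all $1\le i\le n$, then $[\![\mathtt{op}]\!](k_1,\dots,k_n)=k\in\mathcal{K}_{\mathit{unref}(T_0)}$ with $\langle\mathit{unref}(T_0)\Rightarrow T_0[k_1/x_1,\dots,k_n/x_n]\rangle^\ell k\longrightarrow^* k$, while $[\![\mathtt{op}]\!](k_1,\dots,k_n)$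 is undefined if some $k_i$ fails this condition. Well-formedness: $\vdash\emptyset$; $\vdash\Gamma,x{:}T$ if $\vdash\Gamma$, $\Gamma\vdash T$; $\vdash\Gamma,\alpha$ if $\vdash\Gamma$. $\Gamma\vdash B$ if $\vdash\Gamma$; $\Gamma\vdash\alpha$ if $\vdash\Gamma$, $\alpha\in\Gamma$; $\Gamma\vdash x{:}T_1\to T_2$ if $\Gamma\vdash T_1$ and $\Gamma,x{:}T_1\vdash T_2$; $\Gamma\vdash\forall\alpha.T$ if $\Gamma,\alpha\vdash T$; $\Gamma\vdash\{x{:}T\mid e\}$ if $\Gamma\vdash T$ and $\Gamma,x{:}T\vdash e:\mathsf{Bool}$. Compatibility $T_1\parallel T_2$: $B\parallel B$; $\alpha\parallel\alpha$; $\{x{:}T_1\mid e\}\parallel T_2$ and $T_1\parallel\{x{:}T_2\mid e\}$ if $T_1\parallel T_2$; $x{:}T_{11}\to T_{12}\parallel x{:}T_{21}\to T_{22}$ if $T_{11}\parallel T_{21}$ and $T_{12}\parallel T_{22}$; $\forall\alpha.T_1\parallel\forall\alpha.T_2$ if $T_1\parallel T_2$. Conversion: $T_1\Rrightarrow T_2$ if $T_1=T[e_1/x]$, $T_2=T[e_2/x]$ and $e_1\longrightarrow e_2$ for some $T,x,e_1,e_2$; $\equiv$ is the symmetric transitive closure of $\Rrightarrow$. Typing rules: $\Gamma\vdash x:T$ if $\vdash\Gamma$, $x{:}T\in\Gamma$; $\Gamma\vdash k:\mathsf{ty}(k)$ if $\vdash\Gamma$; $\Gamma\vdash\mathtt{op}(e_1,\dots,e_n):T_0[e_1/x_1,\dots,e_n/x_n]$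 if $\vdash\Gamma$, $\mathsf{ty}(\mathtt{op})=x_1{:}T_1\to\dots\to x_n{:}T_n\to T_0$ and $\Gamma\vdash e_i:T_i[e_1/x_1,\dots,e_{i-1}/x_{i-1}]$ for all $i$; $\Gamma\vdash\lambda x{:}T_1.e:x{:}T_1\to T_2$ if $\Gamma,x{:}T_1\vdash e:T_2$; $\Gamma\vdash\langle T_1\Rightarrow T_2\rangle^\ell:T_1\to T_2$ if $\Gamma\vdash T_1$, $\Gamma\vdash T_2$, $T_1\parallel T_2$; $\Gamma\vdash e_1\,e_2:T_2[e_2/x]$ if $\Gamma\vdash e_1:x{:}T_1\to T_2$, $\Gamma\vdash e_2:T_1$, $\Gamma\vdash T_2[e_2/x]$; $\Gamma\vdash\Lambda\alpha.e:\forall\alpha.T$ if $\Gamma,\alpha\vdash e:T$; $\Gamma\vdash e\,T_2:T_1[T_2/\alpha]$ if $\Gamma\vdash e:\forall\alpha.T_1$, $\Gamma\vdash T_2$; $\Gamma\vdash\langle\!\langle\{x{:}T_1\mid e_1\},e_2\rangle\!\rangle^\ell:\{x{:}T_1\mid e_1\}$ if $\Gamma\vdash\{x{:}T_1\mid e_1\}$, $\Gamma\vdash e_2:T_1$; $\Gamma\vdash\langle\{x{:}T_1\mid e_1\},e_2,v\rangle^\ell:\{x{:}T_1\mid e_1\}$ if $\vdash\Gamma$, $\emptyset\vdash\{x{:}T_1\mid e_1\}$, $\emptyset\vdash v:T_1$, $\emptyset\vdash e_2:\mathsf{Bool}$, $e_1[v/x]\longrightarrow^* e_2$; $\Gamma\vdash\Uparrow\ell:T$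 if $\vdash\Gamma$, $\emptyset\vdash T$; $\Gamma\vdash e:T_2$ if $\vdash\Gamma$, $\emptyset\vdash e:T_1$, $\emptyset\vdash T_2$, $T_1\equiv T_2$; $\Gamma\vdash v:T$ if $\vdash\Gamma$, $\emptyset\vdash v:\{x{:}T\mid e\}$; $\Gamma\vdash v:\{x{:}T\mid e\}$ if $\vdash\Gamma$, $\emptyset\vdash v:T$, $\emptyset\vdash\{x{:}T\mid e\}$, $e[v/x]\longrightarrow^*\mathsf{true}$. *)

theory Defs
  imports Main
begin

text \<open>Syntax of F_H, locally in pure de Bruijn style with ONE shared index space for
term variables and type variables.  Every binder (lambda x:T, Lambda alpha, the dependent
arrow x:T1 -> T2 (binding x in T2), forall alpha.T, refinement {x:T | e} (binding x in e))
binds index 0.  'b = base types, 'k = constants, 'o = primitive operations, 'l = blame labels.\<close>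

datatype ('b,'k,'o,'l) ty =
    TBase 'b
  | TVar nat
  | TArr "('b,'k,'o,'l) ty" "('b,'k,'o,'l) ty"     \<comment> \<open>x:T1 -> T2, x bound in T2\<close>
  | TAll "('b,'k,'o,'l) ty"
  | TRef "('b,'k,'o,'l) ty" "('b,'k,'o,'l) tm"      \<comment> \<open>{x:T | e}, x bound in e\<close>
and ('b,'k,'o,'l) tm =
    Var nat
  | Const 'k
  | Op 'o "('b,'k,'o,'l) tm list"
  | Lam "('b,'k,'o,'l) ty" "('b,'k,'o,'l) tm"
  | TLam "('b,'k,'o,'l) tm"
  | Cast "('b,'k,'o,'l) ty" "('b,'k,'o,'l) ty" 'l
  | App "('b,'k,'o,'l) tm" "('b,'k,'o,'l) tm"
  | TApp "('b,'k,'o,'l) tm" "('b,'k,'o,'l) ty"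
  | Wait "('b,'k,'o,'l) ty" "('b,'k,'o,'l) tm" "('b,'k,'o,'l) tm" 'l
      \<comment> \<open>Wait T1 e1 e2 l  =  << {x:T1 | e1}, e2 >>^l\<close>
  | Act "('b,'k,'o,'l) ty" "('b,'k,'o,'l) tm" "('b,'k,'o,'l) tm" "('b,'k,'o,'l) tm" 'l
      \<comment> \<open>Act T1 e1 e2 v l  =  < {x:T1 | e1}, e2, v >^l\<close>
  | Blame 'l

primrec shiftT :: "nat \<Rightarrow> nat \<Rightarrow> ('b,'k,'o,'l) ty \<Rightarrow> ('b,'k,'o,'l) ty"
and shiftE :: "nat \<Rightarrow> nat \<Rightarrow> ('b,'k,'o,'l) tm \<Rightarrow> ('b,'k,'o,'l) tm" where
  "shiftT c d (TBase B) = TBase B"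
| "shiftT c d (TVar n) = TVar (if n < c then n else n + d)"
| "shiftT c d (TArr T1 T2) = TArr (shiftT c d T1) (shiftT (Suc c) d T2)"
| "shiftT c d (TAll T) = TAll (shiftT (Suc c) d T)"
| "shiftT c d (TRef T e) = TRef (shiftT c d T) (shiftE (Suc c) d e)"
| "shiftE c d (Var n) = Var (if n < c then n else n + d)"
| "shiftE c d (Const k) = Const k"
| "shiftE c d (Op p es) = Op p (map (shiftE c d) es)"
| "shiftE c d (Lam T e) = Lam (shiftT c d T) (shiftE (Suc c) d e)"
| "shiftE c d (TLam e) = TLam (shiftE (Suc c) d e)"
| "shiftE c d (Cast T1 T2 l) = Cast (shiftT c d T1) (shiftT c d T2) l"
| "shiftE c d (App e1 e2) = App (shiftE c d e1) (shiftE c d e2)"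
| "shiftE c d (TApp e T) = TApp (shiftE c d e) (shiftT c d T)"
| "shiftE c d (Wait T e1 e2 l) = Wait (shiftT c d T) (shiftE (Suc c) d e1) (shiftE c d e2) l"
| "shiftE c d (Act T e1 e2 v l) =
     Act (shiftT c d T) (shiftE (Suc c) d e1) (shiftE c d e2) (shiftE c d v) l"
| "shiftE c d (Blame l) = Blame l"

text \<open>Capture-avoiding substitution of a term s for (term) variable k; indices above k are
decremented (the binder of k disappears).\<close>
primrec substT :: "nat \<Rightarrow> ('b,'k,'o,'l) tm \<Rightarrow> ('b,'k,'o,'l) ty \<Rightarrow> ('b,'k,'o,'l) ty"
and substE :: "nat \<Rightarrow> ('b,'k,'o,'l) tm \<Rightarrow> ('b,'k,'o,'l) tm \<Rightarrow> ('b,'k,'o,'l) tm" where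
  "substT k s (TBase B) = TBase B"
| "substT k s (TVar n) = TVar (if n \<le> k then n else n - 1)"
| "substT k s (TArr T1 T2) = TArr (substT k s T1) (substT (Suc k) s T2)"
| "substT k s (TAll T) = TAll (substT (Suc k) s T)"
| "substT k s (TRef T e) = TRef (substT k s T) (substE (Suc k) s e)"
| "substE k s (Var n) = (if n < k then Var n else if n = k then shiftE 0 k s else Var (n - 1))"
| "substE k s (Const c) = Const c"
| "substE k s (Op p es) = Op p (map (substE k s) es)"
| "substE k s (Lam T e) = Lam (substT k s T) (substE (Suc k) s e)"
| "substE k s (TLam e) = TLam (substE (Suc k) s e)"
| "substE k s (Cast T1 T2 l) = Cast (substT k s T1) (substT k s T2) l"
| "substE k s (App e1 e2) = App (substE k s e1) (substE k s e2)"
| "substE k s (TApp e T) = TApp (substE k s e) (substT k s T)"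
| "substE k s (Wait T e1 e2 l) = Wait (substT k s T) (substE (Suc k) s e1) (substE k s e2) l"
| "substE k s (Act T e1 e2 v l) =
     Act (substT k s T) (substE (Suc k) s e1) (substE k s e2) (substE k s v) l"
| "substE k s (Blame l) = Blame l"

primrec tsubstT :: "nat \<Rightarrow> ('b,'k,'o,'l) ty \<Rightarrow> ('b,'k,'o,'l) ty \<Rightarrow> ('b,'k,'o,'l) ty"
and tsubstE :: "nat \<Rightarrow> ('b,'k,'o,'l) ty \<Rightarrow> ('b,'k,'o,'l) tm \<Rightarrow> ('b,'k,'o,'l) tm" where
  "tsubstT k S (TBase B) = TBase B"
| "tsubstT k S (TVar n) = (if n < k then TVar n else if n = k then shiftT 0 k S else TVar (n - 1))"
| "tsubstT k S (TArr T1 T2) = TArr (tsubstT k S T1) (tsubstT (Suc k) S T2)"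
| "tsubstT k S (TAll T) = TAll (tsubstT (Suc k) S T)"
| "tsubstT k S (TRef T e) = TRef (tsubstT k S T) (tsubstE (Suc k) S e)"
| "tsubstE k S (Var n) = Var (if n \<le> k then n else n - 1)"
| "tsubstE k S (Const c) = Const c"
| "tsubstE k S (Op p es) = Op p (map (tsubstE k S) es)"
| "tsubstE k S (Lam T e) = Lam (tsubstT k S T) (tsubstE (Suc k) S e)"
| "tsubstE k S (TLam e) = TLam (tsubstE (Suc k) S e)"
| "tsubstE k S (Cast T1 T2 l) = Cast (tsubstT k S T1) (tsubstT k S T2) l"
| "tsubstE k S (App e1 e2) = App (tsubstE k S e1) (tsubstE k S e2)"
| "tsubstE k S (TApp e T) = TApp (tsubstE k S e) (tsubstT k S T)"
| "tsubstE k S (Wait T e1 e2 l) = Wait (tsubstT k S T) (tsubstE (Suc k) S e1) (tsubstE k S e2) l"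
| "tsubstE k S (Act T e1 e2 v l) =
     Act (tsubstT k S T) (tsubstE (Suc k) S e1) (tsubstE k S e2) (tsubstE k S v) l"
| "tsubstE k S (Blame l) = Blame l"

text \<open>Simultaneous substitution T[e1/x1,...,em/xm] for a type T living under the binders
x1,...,xm (x1 outermost, so xi has index m - i).\<close>
fun msubstT :: "('b,'k,'o,'l) tm list \<Rightarrow> ('b,'k,'o,'l) ty \<Rightarrow> ('b,'k,'o,'l) ty" where
  "msubstT [] T = T"
| "msubstT (e # es) T = msubstT es (substT (length es) e T)"

primrec is_value :: "('b,'k,'o,'l) tm \<Rightarrow> bool" where
  "is_value (Var n) = False"
| "is_value (Const k) = True"
| "is_value (Op p es) = False"
| "is_value (Lam T e) = True"
| "is_value (TLam e) = True"
| "is_value (Cast T1 T2 l) = True"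
| "is_value (App e1 e2) = False"
| "is_value (TApp e T) = False"
| "is_value (Wait T e1 e2 l) = False"
| "is_value (Act T e1 e2 v l) = False"
| "is_value (Blame l) = False"

fun is_ref :: "('b,'k,'o,'l) ty \<Rightarrow> bool" where
  "is_ref (TRef T e) = True"
| "is_ref _ = False"

fun unref :: "('b,'k,'o,'l) ty \<Rightarrow> ('b,'k,'o,'l) ty" where
  "unref (TRef T e) = unref T"
| "unref T = T"

text \<open>The language signature: base type of each constant (k : K_B iff cbase k = B),
the base type Bool, the constants true/false, ty(k), the denotation of each primitive
operation (a partial function on tuples of constants), and ty(op) given as the list of
argument types [T1,...,Tn] (Ti living under the binders x1..x_(i-1)) and the result type
T0 (living under x1..xn).\<close>
record ('b,'k,'o,'l) lang =
  cbase :: "'k \<Rightarrow> 'b"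
  boolB :: 'b
  ktrue :: 'k
  kfalse :: 'k
  tyc :: "'k \<Rightarrow> ('b,'k,'o,'l) ty"
  den :: "'o \<Rightarrow> 'k list \<Rightarrow> 'k option"
  tyop :: "'o \<Rightarrow> ('b,'k,'o,'l) ty list \<times> ('b,'k,'o,'l) ty"

inductive red :: "('b,'k,'o,'l) lang \<Rightarrow> ('b,'k,'o,'l) tm \<Rightarrow> ('b,'k,'o,'l) tm \<Rightarrow> bool"
  for L :: "('b,'k,'o,'l) lang" where
  red_op: "den L p ks = Some k \<Longrightarrow> red L (Op p (map Const ks)) (Const k)"
| red_beta: "is_value v \<Longrightarrow> red L (App (Lam T e) v) (substE 0 v e)"
| red_tbeta: "red L (TApp (TLam e) T) (tsubstE 0 T e)"
| red_base: "is_value v \<Longrightarrow> red L (App (Cast (TBase B) (TBase B) l) v) v"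
| red_fun: "is_value v \<Longrightarrow>
    red L (App (Cast (TArr T11 T12) (TArr T21 T22) l) v)
      (Lam T21
        (App (Lam (shiftT 0 1 T11)
                (App (Cast (shiftT 1 1 T12) (shiftT 0 1 T22) l)
                     (App (shiftE 0 2 v) (Var 0))))
             (App (Cast (shiftT 0 1 T21) (shiftT 0 1 T11) l) (Var 0))))"
| red_forall: "is_value v \<Longrightarrow>
    red L (App (Cast (TAll T1) (TAll T2) l) v)
      (TLam (App (Cast T1 T2 l) (TApp (shiftE 0 1 v) (TVar 0))))"
| red_forget: "is_value v \<Longrightarrow>
    red L (App (Cast (TRef T1 e1) T2 l) v) (App (Cast T1 T2 l) v)"
| red_precheck: "is_value v \<Longrightarrow> \<not> is_ref T1 \<Longrightarrow>
    red L (App (Cast T1 (TRef T2 e2) l) v) (Wait T2 e2 (App (Cast T1 T2 l) v) l)"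
| red_check: "is_value v \<Longrightarrow> red L (Wait T e v l) (Act T e (substE 0 v e) v l)"
| red_ok: "red L (Act T e (Const (ktrue L)) v l) v"
| red_fail: "red L (Act T e (Const (kfalse L)) v l) (Blame l)"

datatype ('b,'k,'o,'l) ectx =
    Hole
  | EOp 'o "('b,'k,'o,'l) tm list" "('b,'k,'o,'l) ectx" "('b,'k,'o,'l) tm list"
  | EAppL "('b,'k,'o,'l) ectx" "('b,'k,'o,'l) tm"
  | EAppR "('b,'k,'o,'l) tm" "('b,'k,'o,'l) ectx"
  | ETApp "('b,'k,'o,'l) ectx" "('b,'k,'o,'l) ty"
  | EWait "('b,'k,'o,'l) ty" "('b,'k,'o,'l) tm" "('b,'k,'o,'l) ectx" 'l
  | EAct "('b,'k,'o,'l) ty" "('b,'k,'o,'l) tm" "('b,'k,'o,'l) ectx" "('b,'k,'o,'l) tm" 'l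

primrec plug :: "('b,'k,'o,'l) ectx \<Rightarrow> ('b,'k,'o,'l) tm \<Rightarrow> ('b,'k,'o,'l) tm" where
  "plug Hole e = e"
| "plug (EOp p vs E es) e = Op p (vs @ [plug E e] @ es)"
| "plug (EAppL E e2) e = App (plug E e) e2"
| "plug (EAppR v E) e = App v (plug E e)"
| "plug (ETApp E T) e = TApp (plug E e) T"
| "plug (EWait T e1 E l) e = Wait T e1 (plug E e) l"
| "plug (EAct T e1 E v l) e = Act T e1 (plug E e) v l"

primrec ectx_ok :: "('b,'k,'o,'l) ectx \<Rightarrow> bool" where
  "ectx_ok Hole = True"
| "ectx_ok (EOp p vs E es) = ((\<forall>v\<in>set vs. is_value v) \<and> ectx_ok E)"
| "ectx_ok (EAppL E e2) = ectx_ok E"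
| "ectx_ok (EAppR v E) = (is_value v \<and> ectx_ok E)"
| "ectx_ok (ETApp E T) = ectx_ok E"
| "ectx_ok (EWait T e1 E l) = ectx_ok E"
| "ectx_ok (EAct T e1 E v l) = (is_value v \<and> ectx_ok E)"

inductive step :: "('b,'k,'o,'l) lang \<Rightarrow> ('b,'k,'o,'l) tm \<Rightarrow> ('b,'k,'o,'l) tm \<Rightarrow> bool"
  for L :: "('b,'k,'o,'l) lang" where
  step_red: "ectx_ok E \<Longrightarrow> red L e1 e2 \<Longrightarrow> step L (plug E e1) (plug E e2)"
| step_blame: "ectx_ok E \<Longrightarrow> E \<noteq> Hole \<Longrightarrow> step L (plug E (Blame l)) (Blame l)"

abbreviation steps :: "('b,'k,'o,'l) lang \<Rightarrow> ('b,'k,'o,'l) tm \<Rightarrow> ('b,'k,'o,'l) tm \<Rightarrow> bool" where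
  "steps L \<equiv> (step L)\<^sup>*\<^sup>*"

inductive compat :: "('b,'k,'o,'l) ty \<Rightarrow> ('b,'k,'o,'l) ty \<Rightarrow> bool" where
  "compat (TBase B) (TBase B)"
| "compat (TVar a) (TVar a)"
| "compat T1 T2 \<Longrightarrow> compat (TRef T1 e) T2"
| "compat T1 T2 \<Longrightarrow> compat T1 (TRef T2 e)"
| "compat T11 T21 \<Longrightarrow> compat T12 T22 \<Longrightarrow> compat (TArr T11 T12) (TArr T21 T22)"
| "compat T1 T2 \<Longrightarrow> compat (TAll T1) (TAll T2)"

definition conv1 :: "('b,'k,'o,'l) lang \<Rightarrow> ('b,'k,'o,'l) ty \<Rightarrow> ('b,'k,'o,'l) ty \<Rightarrow> bool" where
  "conv1 L T1 T2 \<longleftrightarrow> (\<exists>T e1 e2. T1 = substT 0 e1 T \<and> T2 = substT 0 e2 T \<and> step L e1 e2)"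

definition tyeq :: "('b,'k,'o,'l) lang \<Rightarrow> ('b,'k,'o,'l) ty \<Rightarrow> ('b,'k,'o,'l) ty \<Rightarrow> bool" where
  "tyeq L = (\<lambda>T1 T2. conv1 L T1 T2 \<or> conv1 L T2 T1)\<^sup>+\<^sup>+"

text \<open>Typing contexts: head of the list = most recently bound variable (index 0).\<close>
datatype ('b,'k,'o,'l) centry = EVar "('b,'k,'o,'l) ty" | ETVar

type_synonym ('b,'k,'o,'l) ctx = "('b,'k,'o,'l) centry list"

inductive wfctx :: "('b,'k,'o,'l) lang \<Rightarrow> ('b,'k,'o,'l) ctx \<Rightarrow> bool"
  and wfty :: "('b,'k,'o,'l) lang \<Rightarrow> ('b,'k,'o,'l) ctx \<Rightarrow> ('b,'k,'o,'l) ty \<Rightarrow> bool"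
  and has_type :: "('b,'k,'o,'l) lang \<Rightarrow> ('b,'k,'o,'l) ctx \<Rightarrow> ('b,'k,'o,'l) tm \<Rightarrow> ('b,'k,'o,'l) ty \<Rightarrow> bool"
  for L :: "('b,'k,'o,'l) lang" where
  wf_empty: "wfctx L []"
| wf_var: "wfctx L \<Gamma> \<Longrightarrow> wfty L \<Gamma> T \<Longrightarrow> wfctx L (EVar T # \<Gamma>)"
| wf_tvar: "wfctx L \<Gamma> \<Longrightarrow> wfctx L (ETVar # \<Gamma>)"
| wft_base: "wfctx L \<Gamma> \<Longrightarrow> wfty L \<Gamma> (TBase B)"
| wft_var: "wfctx L \<Gamma> \<Longrightarrow> a < length \<Gamma> \<Longrightarrow> \<Gamma> ! a = ETVar \<Longrightarrow> wfty L \<Gamma> (TVar a)"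
| wft_arr: "wfty L \<Gamma> T1 \<Longrightarrow> wfty L (EVar T1 # \<Gamma>) T2 \<Longrightarrow> wfty L \<Gamma> (TArr T1 T2)"
| wft_all: "wfty L (ETVar # \<Gamma>) T \<Longrightarrow> wfty L \<Gamma> (TAll T)"
| wft_ref: "wfty L \<Gamma> T \<Longrightarrow> has_type L (EVar T # \<Gamma>) e (TBase (boolB L)) \<Longrightarrow> wfty L \<Gamma> (TRef T e)"
| t_var: "wfctx L \<Gamma> \<Longrightarrow> x < length \<Gamma> \<Longrightarrow> \<Gamma> ! x = EVar T \<Longrightarrow>
    has_type L \<Gamma> (Var x) (shiftT 0 (Suc x) T)"
| t_const: "wfctx L \<Gamma> \<Longrightarrow> has_type L \<Gamma> (Const k) (tyc L k)"
| t_op: "wfctx L \<Gamma> \<Longrightarrow> tyop L p = (Ts, T0) \<Longrightarrow> length es = length Ts \<Longrightarrow>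
    (\<forall>i < length es. has_type L \<Gamma> (es ! i) (msubstT (take i es) (Ts ! i))) \<Longrightarrow>
    has_type L \<Gamma> (Op p es) (msubstT es T0)"
| t_lam: "has_type L (EVar T1 # \<Gamma>) e T2 \<Longrightarrow> has_type L \<Gamma> (Lam T1 e) (TArr T1 T2)"
| t_cast: "wfty L \<Gamma> T1 \<Longrightarrow> wfty L \<Gamma> T2 \<Longrightarrow> compat T1 T2 \<Longrightarrow>
    has_type L \<Gamma> (Cast T1 T2 l) (TArr T1 (shiftT 0 1 T2))"
| t_app: "has_type L \<Gamma> e1 (TArr T1 T2) \<Longrightarrow> has_type L \<Gamma> e2 T1 \<Longrightarrow> wfty L \<Gamma> (substT 0 e2 T2) \<Longrightarrow>
    has_type L \<Gamma> (App e1 e2) (substT 0 e2 T2)"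
| t_tlam: "has_type L (ETVar # \<Gamma>) e T \<Longrightarrow> has_type L \<Gamma> (TLam e) (TAll T)"
| t_tapp: "has_type L \<Gamma> e (TAll T1) \<Longrightarrow> wfty L \<Gamma> T2 \<Longrightarrow> has_type L \<Gamma> (TApp e T2) (tsubstT 0 T2 T1)"
| t_wait: "wfty L \<Gamma> (TRef T1 e1) \<Longrightarrow> has_type L \<Gamma> e2 T1 \<Longrightarrow>
    has_type L \<Gamma> (Wait T1 e1 e2 l) (TRef T1 e1)"
| t_act: "wfctx L \<Gamma> \<Longrightarrow> wfty L [] (TRef T1 e1) \<Longrightarrow> is_value v \<Longrightarrow> has_type L [] v T1 \<Longrightarrow>
    has_type L [] e2 (TBase (boolB L)) \<Longrightarrow> steps L (substE 0 v e1) e2 \<Longrightarrow>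
    has_type L \<Gamma> (Act T1 e1 e2 v l) (TRef T1 e1)"
| t_blame: "wfctx L \<Gamma> \<Longrightarrow> wfty L [] T \<Longrightarrow> has_type L \<Gamma> (Blame l) T"
| t_conv: "wfctx L \<Gamma> \<Longrightarrow> has_type L [] e T1 \<Longrightarrow> wfty L [] T2 \<Longrightarrow> tyeq L T1 T2 \<Longrightarrow> has_type L \<Gamma> e T2"
| t_forget: "wfctx L \<Gamma> \<Longrightarrow> is_value v \<Longrightarrow> has_type L [] v (TRef T e) \<Longrightarrow> has_type L \<Gamma> v T"
| t_exact: "wfctx L \<Gamma> \<Longrightarrow> is_value v \<Longrightarrow> has_type L [] v T \<Longrightarrow> wfty L [] (TRef T e) \<Longrightarrow>
    steps L (substE 0 v e) (Const (ktrue L)) \<Longrightarrow> has_type L \<Gamma> v (TRef T e)"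

definition lang_ok :: "('b,'k,'o,'l) lang \<Rightarrow> bool" where
  "lang_ok L \<longleftrightarrow>
     ktrue L \<noteq> kfalse L \<and>
     (\<forall>k. cbase L k = boolB L \<longleftrightarrow> k = ktrue L \<or> k = kfalse L) \<and>
     (\<forall>k. unref (tyc L k) = TBase (cbase L k) \<and> wfty L [] (tyc L k) \<and>
          (\<forall>l. steps L (App (Cast (TBase (cbase L k)) (tyc L k) l) (Const k)) (Const k))) \<and>
     (\<forall>p Ts T0. tyop L p = (Ts, T0) \<longrightarrow>
        (\<forall>T\<in>set (T0 # Ts). \<exists>B. unref T = TBase B) \<and>
        (\<forall>l ks. length ks = length Ts \<longrightarrow>
           (let ok = (\<lambda>i. unref (Ts ! i) = TBase (cbase L (ks ! i)) \<and>
                       steps L (App (Cast (unref (Ts ! i)) (msubstT (map Const (take i ks)) (Ts ! i)) l)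
                                    (Const (ks ! i))) (Const (ks ! i)))
            in ((\<forall>i < length ks. ok i) \<longrightarrow>
                  (\<exists>k. den L p ks = Some k \<and> unref T0 = TBase (cbase L k) \<and>
                       steps L (App (Cast (unref T0) (msubstT (map Const ks) T0) l) (Const k)) (Const k)))
             \<and> ((\<exists>i < length ks. \<not> ok i) \<longrightarrow> den L p ks = None))))"

end

theory Submission
  imports Defs
begin

lemma shift_zero[simp]:
  fixes T :: "('b,'k,'o,'l) ty" and e :: "('b,'k,'o,'l) tm"
  shows "shiftT c 0 T = T" "shiftE c 0 e = e"
  by (induct T and e arbitrary: c and c rule: ty.induct tm.induct) (auto intro: map_idI)

lemma shift_shift:
  fixes T :: "('b,'k,'o,'l) ty" and e :: "('b,'k,'o,'l) tm"
  shows "c' \<le> c \<Longrightarrow> c \<le> c' + n \<Longrightarrow> shiftT c d (shiftT c' n T) = shiftT c' (n + d) T"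
    "c' \<le> c \<Longrightarrow> c \<le> c' + n \<Longrightarrow> shiftE c d (shiftE c' n e) = shiftE c' (n + d) e"
  by (induct T and e arbitrary: c c' and c c' rule: ty.induct tm.induct) auto

lemma subst_shift:
  fixes T :: "('b,'k,'o,'l) ty" and e :: "('b,'k,'o,'l) tm"
  shows "c \<le> k \<Longrightarrow> k \<le> c + n \<Longrightarrow> substT k v (shiftT c (Suc n) T) = shiftT c n T"
    "c \<le> k \<Longrightarrow> k \<le> c + n \<Longrightarrow> substE k v (shiftE c (Suc n) e) = shiftE c n e"
  by (induct T and e arbitrary: c k and c k rule: ty.induct tm.induct) auto

lemma tsubst_shift:
  fixes T :: "('b,'k,'o,'l) ty" and e :: "('b,'k,'o,'l) tm"
  shows "c \<le> k \<Longrightarrow> k \<le> c + n \<Longrightarrow> tsubstT k v (shiftT c (Suc n) T) = shiftT c n T"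
    "c \<le> k \<Longrightarrow> k \<le> c + n \<Longrightarrow> tsubstE k v (shiftE c (Suc n) e) = shiftE c n e"
  by (induct T and e arbitrary: c k and c k rule: ty.induct tm.induct) auto


inductive sstep :: "('b,'k,'o,'l) lang \<Rightarrow> ('b,'k,'o,'l) tm \<Rightarrow> ('b,'k,'o,'l) tm \<Rightarrow> bool"
  for L :: "('b,'k,'o,'l) lang" where
  S_red: "red L e e' \<Longrightarrow> sstep L e e'"
| S_op: "\<forall>v\<in>set vs. is_value v \<Longrightarrow> sstep L e e' \<Longrightarrow> sstep L (Op p (vs @ e # es)) (Op p (vs @ e' # es))"
| S_appL: "sstep L e e' \<Longrightarrow> sstep L (App e e2) (App e' e2)"
| S_appR: "is_value v \<Longrightarrow> sstep L e e' \<Longrightarrow> sstep L (App v e) (App v e')"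
| S_tapp: "sstep L e e' \<Longrightarrow> sstep L (TApp e T) (TApp e' T)"
| S_wait: "sstep L e e' \<Longrightarrow> sstep L (Wait T p e l) (Wait T p e' l)"
| S_act: "sstep L e e' \<Longrightarrow> sstep L (Act T p e v l) (Act T p e' v l)"
| B_op: "\<forall>v\<in>set vs. is_value v \<Longrightarrow> sstep L (Op p (vs @ Blame l # es)) (Blame l)"
| B_appL: "sstep L (App (Blame l) e2) (Blame l)"
| B_appR: "is_value v \<Longrightarrow> sstep L (App v (Blame l)) (Blame l)"
| B_tapp: "sstep L (TApp (Blame l) T) (Blame l)"
| B_wait: "sstep L (Wait T p (Blame l) l') (Blame l)"
| B_act: "sstep L (Act T p (Blame l) v l') (Blame l)"

abbreviation ssteps where "ssteps L \<equiv> (sstep L)\<^sup>*\<^sup>*"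

lemma red_not_value: "red L a b \<Longrightarrow> \<not> is_value a"
  by (cases rule: red.cases) auto

lemma sstep_not_value: "sstep L a b \<Longrightarrow> \<not> is_value a"
  by (cases rule: sstep.cases) (auto dest: red_not_value)

lemma sstep_not_blame: "sstep L (Blame l) b \<Longrightarrow> False"
  by (cases rule: sstep.cases) (auto elim: red.cases)

lemma sstep_not_var: "sstep L (Var i) b \<Longrightarrow> False"
  by (cases rule: sstep.cases) (auto elim: red.cases)

lemma red_app_vals: "red L (App x y) z \<Longrightarrow> is_value x \<and> is_value y"
  by (erule red.cases) auto
lemma red_op_vals: "red L (Op p es) z \<Longrightarrow> \<forall>e\<in>set es. \<exists>k. e = Const k"
  by (erule red.cases) auto
lemma red_tapp_val: "red L (TApp x T) z \<Longrightarrow> is_value x"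
  by (erule red.cases) auto
lemma red_wait_val: "red L (Wait T p x l) z \<Longrightarrow> is_value x"
  by (erule red.cases) auto
lemma red_act_val: "red L (Act T p x v l) z \<Longrightarrow> \<exists>k. x = Const k"
  by (erule red.cases) auto

lemma lang_ok_tf: "lang_ok L \<Longrightarrow> ktrue L \<noteq> kfalse L"
  by (simp add: lang_ok_def)

lemma map_Const_eq[simp]: "(map Const xs = map Const ys) = (xs = ys)"
  by (simp add: inj_map_eq_map inj_on_def)

lemma red_det: "lang_ok L \<Longrightarrow> red L a b \<Longrightarrow> red L a c \<Longrightarrow> b = c"
  apply (drule lang_ok_tf)
  apply (erule red.cases; erule red.cases)
  apply auto
  done

lemma split_unique:
  "vs @ e # es = vs' @ e' # es' \<Longrightarrow> \<forall>v\<in>set vs. is_value v \<Longrightarrow> \<forall>v\<in>set vs'. is_value v \<Longrightarrow>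
   \<not> is_value e \<Longrightarrow> \<not> is_value e' \<Longrightarrow> vs = vs' \<and> e = e' \<and> es = es'"
proof (induct vs arbitrary: vs')
  case Nil then show ?case by (cases vs') auto
next
  case (Cons a vs) then show ?case by (cases vs') auto
qed


lemma blame_not_value[simp]: "\<not> is_value (Blame l)" by simp

lemma sstep_det: "sstep L a b \<Longrightarrow> lang_ok L \<Longrightarrow> sstep L a c \<Longrightarrow> b = c"
proof (induct arbitrary: c rule: sstep.induct)
  case (S_red e e')
  from S_red(3) S_red(1,2) show ?case
  proof (cases rule: sstep.cases)
    case (S_op vs e1 e1' p es)
    then show ?thesis using S_red(1) by (fastforce dest!: red_op_vals sstep_not_value)
  next
    case (S_act e1 e1' T p v l)
    then show ?thesis using S_red(1) by (fastforce dest!: red_act_val sstep_not_value)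
  next
    case (B_op vs p l es)
    then show ?thesis using S_red(1) by (fastforce dest!: red_op_vals)
  next
    case (B_act T p l v l')
    then show ?thesis using S_red(1) by (fastforce dest!: red_act_val)
  qed (auto dest: red_det red_app_vals red_tapp_val red_wait_val sstep_not_value)
next
  case (S_op vs e e' p es)
  have ne: "\<not> is_value e" using S_op(2) by (rule sstep_not_value)
  from S_op(5) show ?case
  proof (cases rule: sstep.cases)
    case (S_red)
    then show ?thesis using S_op(2) by (fastforce dest!: red_op_vals sstep_not_value)
  next
    case (S_op vs1 e1 e1' es1)
    with split_unique[of vs e es vs1 e1 es1] S_op(1) ne \<open>\<forall>v\<in>set vs. is_value v\<close>
    have "vs = vs1 \<and> e = e1 \<and> es = es1" by (auto dest: sstep_not_value)
    then show ?thesis using S_op S_op.hyps(3) \<open>lang_ok L\<close> by auto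
  next
    case (B_op vs1 l es1)
    with split_unique[of vs e es vs1 "Blame l" es1] S_op(1) ne
    have "e = Blame l" by auto
    then show ?thesis using S_op(2) by (auto dest: sstep_not_blame)
  qed
next
  case (S_appL e e' e2)
  note IH = S_appL(2) and ok = S_appL(3) and H = S_appL(1-1)
  from S_appL(4) show ?case
  proof (cases rule: sstep.cases)
    case S_appL
    then show ?thesis using IH ok by auto
  qed (use H in \<open>auto dest: sstep_not_value red_app_vals sstep_not_blame\<close>)
next
  case (S_appR v e e')
  note IH = S_appR(3) and ok = S_appR(4) and H = S_appR(1-2)
  from S_appR(5) show ?case
  proof (cases rule: sstep.cases)
    case S_appR
    then show ?thesis using IH ok by auto
  qed (use H in \<open>auto dest: sstep_not_value red_app_vals sstep_not_blame\<close>)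
next
  case (S_tapp e e' T)
  note IH = S_tapp(2) and ok = S_tapp(3) and H = S_tapp(1-1)
  from S_tapp(4) show ?case
  proof (cases rule: sstep.cases)
    case S_tapp
    then show ?thesis using IH ok by auto
  qed (use H in \<open>auto dest: sstep_not_value red_tapp_val sstep_not_blame\<close>)
next
  case (S_wait e e' T p l)
  note IH = S_wait(2) and ok = S_wait(3) and H = S_wait(1-1)
  from S_wait(4) show ?case
  proof (cases rule: sstep.cases)
    case S_wait
    then show ?thesis using IH ok by auto
  qed (use H in \<open>auto dest: sstep_not_value red_wait_val sstep_not_blame\<close>)
next
  case (S_act e e' T p v l)
  note IH = S_act(2) and ok = S_act(3) and H = S_act(1-1)
  from S_act(4) show ?case
  proof (cases rule: sstep.cases)
    case S_act
    then show ?thesis using IH ok by auto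
  qed (use H in \<open>auto dest!: red_act_val dest: sstep_not_value sstep_not_blame\<close>)
next
  case (B_op vs p l es)
  note vv = B_op(1)
  from B_op(3) show ?case
  proof (cases rule: sstep.cases)
    case (S_red)
    then show ?thesis by (fastforce dest!: red_op_vals)
  next
    case (S_op vs1 e1 e1' es1)
    with split_unique[of vs "Blame l" es vs1 e1 es1] vv
    have "e1 = Blame l" by (auto dest: sstep_not_value)
    then show ?thesis using S_op by (auto dest: sstep_not_blame)
  next
    case (B_op vs1 l1 es1)
    with split_unique[of vs "Blame l" es vs1 "Blame l1" es1] vv
    show ?thesis by auto
  qed
next
  case (B_appL l e2)
  from B_appL(2) show ?case
    by (cases rule: sstep.cases) (auto dest: sstep_not_value red_app_vals sstep_not_blame)
next
  case (B_appR v l)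
  from B_appR(3) B_appR(1) show ?case
    by (cases rule: sstep.cases) (auto dest: sstep_not_value red_app_vals sstep_not_blame)
next
  case (B_tapp l T)
  from B_tapp(2) show ?case
    by (cases rule: sstep.cases) (auto dest: red_tapp_val sstep_not_blame)
next
  case (B_wait T p l l')
  from B_wait(2) show ?case
    by (cases rule: sstep.cases) (auto dest: red_wait_val sstep_not_blame)
next
  case (B_act T p l v l')
  from B_act(2) show ?case
    by (cases rule: sstep.cases) (auto dest: red_act_val sstep_not_blame)
qed


inductive Rt :: "('b,'k,'o,'l) lang \<Rightarrow> nat \<Rightarrow> ('b,'k,'o,'l) ty \<Rightarrow> ('b,'k,'o,'l) ty \<Rightarrow> bool"
  and Re :: "('b,'k,'o,'l) lang \<Rightarrow> nat \<Rightarrow> ('b,'k,'o,'l) tm \<Rightarrow> ('b,'k,'o,'l) tm \<Rightarrow> bool"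
  for L :: "('b,'k,'o,'l) lang" where
  R_base: "Rt L n (TBase B) (TBase B)"
| R_tvar: "Rt L n (TVar a) (TVar a)"
| R_arr: "Rt L n T1 T1' \<Longrightarrow> Rt L (Suc n) T2 T2' \<Longrightarrow> Rt L n (TArr T1 T2) (TArr T1' T2')"
| R_all: "Rt L (Suc n) T T' \<Longrightarrow> Rt L n (TAll T) (TAll T')"
| R_ref: "Rt L n T T' \<Longrightarrow> Re L (Suc n) e e' \<Longrightarrow> Rt L n (TRef T e) (TRef T' e')"
| R_var: "Re L n (Var i) (Var i)"
| R_const: "Re L n (Const c) (Const c)"
| R_op: "list_all2 (Re L n) es es' \<Longrightarrow> Re L n (Op p es) (Op p es')"
| R_lam: "Rt L n T T' \<Longrightarrow> Re L (Suc n) e e' \<Longrightarrow> Re L n (Lam T e) (Lam T' e')"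
| R_tlam: "Re L (Suc n) e e' \<Longrightarrow> Re L n (TLam e) (TLam e')"
| R_cast: "Rt L n A A' \<Longrightarrow> Rt L n B B' \<Longrightarrow> Re L n (Cast A B l) (Cast A' B' l)"
| R_app: "Re L n a a' \<Longrightarrow> Re L n b b' \<Longrightarrow> Re L n (App a b) (App a' b')"
| R_tapp: "Re L n a a' \<Longrightarrow> Rt L n T T' \<Longrightarrow> Re L n (TApp a T) (TApp a' T')"
| R_wait: "Rt L n T T' \<Longrightarrow> Re L (Suc n) e e' \<Longrightarrow> Re L n a a' \<Longrightarrow>
    Re L n (Wait T e a l) (Wait T' e' a' l)"
| R_act: "Rt L n T T' \<Longrightarrow> Re L (Suc n) e e' \<Longrightarrow> Re L n a a' \<Longrightarrow> Re L n v v' \<Longrightarrow>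
    Re L n (Act T e a v l) (Act T' e' a' v' l)"
| R_blame: "Re L n (Blame l) (Blame l)"
| R_leaf: "ssteps L X Y \<Longrightarrow> Re L n (shiftE 0 n X) (shiftE 0 n Y)"

lemma R_refl:
  fixes T :: "('b,'k,'o,'l) ty" and e :: "('b,'k,'o,'l) tm"
  shows "Rt L n T T" "Re L n e e"
  by (induct T and e arbitrary: n and n rule: ty.induct tm.induct)
     (auto intro: Rt_Re.intros simp: list_all2_same)

lemma R_shift:
  shows "Rt L n T T' \<Longrightarrow> c \<le> n \<Longrightarrow> Rt L (n + d) (shiftT c d T) (shiftT c d T')"
    and "Re L n e e' \<Longrightarrow> c \<le> n \<Longrightarrow> Re L (n + d) (shiftE c d e) (shiftE c d e')"
proof (induct arbitrary: c and c rule: Rt_Re.inducts)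
  case (R_op n es es' p)
  have "list_all2 (\<lambda>x y. Re L (n + d) (shiftE c d x) (shiftE c d y)) es es'"
    by (rule list_all2_mono[OF R_op(1)]) (use R_op(2) in auto)
  then show ?case
    by (auto intro!: Rt_Re.intros simp: list_all2_map1 list_all2_map2)
next
  case (R_leaf X Y n)
  then have "shiftE c d (shiftE 0 n X) = shiftE 0 (n + d) X" "shiftE c d (shiftE 0 n Y) = shiftE 0 (n + d) Y"
    by (auto simp: shift_shift)
  then show ?case using R_leaf by (auto intro: Rt_Re.intros)
qed (auto intro!: Rt_Re.intros)

lemma R_subst:
  shows "Rt L m T T' \<Longrightarrow> m = Suc (n + k) \<Longrightarrow> Re L n v w \<Longrightarrow> Rt L (n + k) (substT k v T) (substT k w T')"
    and "Re L m e e' \<Longrightarrow> m = Suc (n + k) \<Longrightarrow> Re L n v w \<Longrightarrow> Re L (n + k) (substE k v e) (substE k w e')"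
proof (induct arbitrary: k and k rule: Rt_Re.inducts)
  case (R_op m es es' p)
  have "list_all2 (\<lambda>x y. Re L (n + k) (substE k v x) (substE k w y)) es es'"
    by (rule list_all2_mono[OF R_op(1)]) (use R_op(2,3) in auto)
  then show ?case
    by (auto intro!: Rt_Re.intros simp: list_all2_map1 list_all2_map2)
next
  case (R_var m i)
  then show ?case
    using R_shift(2)[of L n v w 0 k] by (auto intro: Rt_Re.intros)
next
  case (R_leaf X Y m)
  then have "substE k v (shiftE 0 m X) = shiftE 0 (n + k) X" "substE k w (shiftE 0 m Y) = shiftE 0 (n + k) Y"
    by (auto simp: subst_shift)
  then show ?case using R_leaf by (auto intro: Rt_Re.intros)
qed (auto intro!: Rt_Re.intros)

lemma R_tsubst:
  shows "Rt L m T T' \<Longrightarrow> m = Suc (n + k) \<Longrightarrow> Rt L n S S' \<Longrightarrow> Rt L (n + k) (tsubstT k S T) (tsubstT k S' T')"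
    and "Re L m e e' \<Longrightarrow> m = Suc (n + k) \<Longrightarrow> Rt L n S S' \<Longrightarrow> Re L (n + k) (tsubstE k S e) (tsubstE k S' e')"
proof (induct arbitrary: k and k rule: Rt_Re.inducts)
  case (R_op m es es' p)
  have "list_all2 (\<lambda>x y. Re L (n + k) (tsubstE k S x) (tsubstE k S' y)) es es'"
    by (rule list_all2_mono[OF R_op(1)]) (use R_op(2,3) in auto)
  then show ?case
    by (auto intro!: Rt_Re.intros simp: list_all2_map1 list_all2_map2)
next
  case (R_tvar m i)
  then show ?case
    using R_shift(1)[of L n S S' 0 k] by (auto intro: Rt_Re.intros)
next
  case (R_leaf X Y m)
  then have "tsubstE k S (shiftE 0 m X) = shiftE 0 (n + k) X" "tsubstE k S' (shiftE 0 m Y) = shiftE 0 (n + k) Y"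
    by (auto simp: tsubst_shift)
  then show ?case using R_leaf by (auto intro: Rt_Re.intros)
qed (auto intro!: Rt_Re.intros)

lemma R_of_subst:
  fixes T :: "('b,'k,'o,'l) ty" and e :: "('b,'k,'o,'l) tm"
  assumes "ssteps L e1 e2"
  shows "Rt L k (substT k e1 T) (substT k e2 T)" "Re L k (substE k e1 e) (substE k e2 e)"
  by (induct T and e arbitrary: k and k rule: ty.induct tm.induct)
     (auto intro!: Rt_Re.intros R_leaf[OF assms] simp: list_all2_map1 list_all2_map2 list_all2_same)


lemma Re_leaf0: "ssteps L X Y \<Longrightarrow> Re L 0 X Y"
  using R_leaf[of L X Y 0] by simp

lemma ssteps_nf: "ssteps L X Y \<Longrightarrow> (\<And>z. \<not> sstep L X z) \<Longrightarrow> Y = X"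
  by (erule converse_rtranclpE) auto

lemma ssteps_value: "ssteps L X Y \<Longrightarrow> is_value X \<Longrightarrow> Y = X"
  using ssteps_nf sstep_not_value by metis

lemma ssteps_blame: "ssteps L (Blame l) Y \<Longrightarrow> Y = Blame l"
  using ssteps_nf sstep_not_blame by metis

lemma is_value_shift[simp]: "is_value (shiftE c d X) = is_value X"
  by (cases X) auto

lemma shift_eq_simps:
  "shiftE c d X = Lam T e \<Longrightarrow> \<exists>T0 e0. X = Lam T0 e0"
  "shiftE c d X = TLam e \<Longrightarrow> \<exists>e0. X = TLam e0"
  "shiftE c d X = Cast A B l \<Longrightarrow> \<exists>A0 B0. X = Cast A0 B0 l"
  "shiftE c d X = Const k \<Longrightarrow> X = Const k"
  "shiftE c d X = Blame l \<Longrightarrow> X = Blame l"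
  by (cases X; auto)+

lemma Re_value_same: "a = shiftE 0 n X \<Longrightarrow> b = shiftE 0 n Y \<Longrightarrow>
  ssteps L X Y \<Longrightarrow> is_value a \<or> (\<exists>l. a = Blame l) \<Longrightarrow> b = a"
proof -
  assume h: "a = shiftE 0 n X" "b = shiftE 0 n Y" "ssteps L X Y" "is_value a \<or> (\<exists>l. a = Blame l)"
  then have "is_value X \<or> (\<exists>l. X = Blame l)" by (auto dest: shift_eq_simps)
  then have "Y = X" using h(3) ssteps_value ssteps_blame by metis
  then show "b = a" using h by simp
qed

lemma Re_Lam:
  assumes "Re L n (Lam T e) b"
  shows "\<exists>T' e'. b = Lam T' e' \<and> Rt L n T T' \<and> Re L (Suc n) e e'"
  using assms
proof (cases rule: Re.cases)
  case R_leaf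
  then obtain X Y where "Lam T e = shiftE 0 n X" "b = shiftE 0 n Y" "ssteps L X Y" by blast
  then have "b = Lam T e" by (rule Re_value_same) simp
  then show ?thesis by (auto intro: R_refl)
qed auto

lemma Re_TLam:
  assumes "Re L n (TLam e) b"
  shows "\<exists>e'. b = TLam e' \<and> Re L (Suc n) e e'"
  using assms
proof (cases rule: Re.cases)
  case R_leaf
  then obtain X Y where "TLam e = shiftE 0 n X" "b = shiftE 0 n Y" "ssteps L X Y" by blast
  then have "b = TLam e" by (rule Re_value_same) simp
  then show ?thesis by (auto intro: R_refl)
qed auto

lemma Re_Cast:
  assumes "Re L n (Cast A B l) b"
  shows "\<exists>A' B'. b = Cast A' B' l \<and> Rt L n A A' \<and> Rt L n B B'"
  using assms
proof (cases rule: Re.cases)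
  case R_leaf
  then obtain X Y where "Cast A B l = shiftE 0 n X" "b = shiftE 0 n Y" "ssteps L X Y" by blast
  then have "b = Cast A B l" by (rule Re_value_same) simp
  then show ?thesis by (auto intro: R_refl)
qed auto

lemma Re_Const:
  assumes "Re L n (Const k) b"
  shows "b = Const k"
  using assms
proof (cases rule: Re.cases)
  case R_leaf
  then obtain X Y where "Const k = shiftE 0 n X" "b = shiftE 0 n Y" "ssteps L X Y" by blast
  then have "b = Const k" by (rule Re_value_same) simp
  then show ?thesis by (auto intro: R_refl)
qed auto

lemma Re_Blame:
  assumes "Re L n (Blame l) b"
  shows "b = Blame l"
  using assms
proof (cases rule: Re.cases)
  case R_leaf
  then obtain X Y where "Blame l = shiftE 0 n X" "b = shiftE 0 n Y" "ssteps L X Y" by blast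
  then have "b = Blame l" by (rule Re_value_same) simp
  then show ?thesis by (auto intro: R_refl)
qed auto

lemma Re_val: "Re L n a b \<Longrightarrow> is_value a \<Longrightarrow> is_value b"
  by (cases a) (auto dest!: Re_Lam Re_TLam Re_Cast Re_Const)


lemma Re0L_App: "Re L 0 (App x y) b \<Longrightarrow> ssteps L (App x y) b \<or> (\<exists>x' y'. b = App x' y' \<and> Re L 0 x x' \<and> Re L 0 y y')"
  by (erule Re.cases) auto
lemma Re0L_Op: "Re L 0 (Op p es) b \<Longrightarrow> ssteps L (Op p es) b \<or> (\<exists>es'. b = Op p es' \<and> list_all2 (Re L 0) es es')"
  by (erule Re.cases) auto
lemma Re0L_TApp: "Re L 0 (TApp x T) b \<Longrightarrow> ssteps L (TApp x T) b \<or> (\<exists>x' T'. b = TApp x' T' \<and> Re L 0 x x' \<and> Rt L 0 T T')"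
  by (erule Re.cases) auto
lemma Re0L_Wait: "Re L 0 (Wait T e x l) b \<Longrightarrow> ssteps L (Wait T e x l) b \<or>
   (\<exists>T' e' x'. b = Wait T' e' x' l \<and> Rt L 0 T T' \<and> Re L 1 e e' \<and> Re L 0 x x')"
  by (erule Re.cases) auto
lemma Re0L_Act: "Re L 0 (Act T e x v l) b \<Longrightarrow> ssteps L (Act T e x v l) b \<or>
   (\<exists>T' e' x' v'. b = Act T' e' x' v' l \<and> Rt L 0 T T' \<and> Re L 1 e e' \<and> Re L 0 x x' \<and> Re L 0 v v')"
  by (erule Re.cases) auto

lemma Re0R_App: "Re L 0 a (App x y) \<Longrightarrow> ssteps L a (App x y) \<or> (\<exists>x' y'. a = App x' y' \<and> Re L 0 x' x \<and> Re L 0 y' y)"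
  by (erule Re.cases) auto
lemma Re0R_Op: "Re L 0 a (Op p es) \<Longrightarrow> ssteps L a (Op p es) \<or> (\<exists>es'. a = Op p es' \<and> list_all2 (Re L 0) es' es)"
  by (erule Re.cases) auto
lemma Re0R_TApp: "Re L 0 a (TApp x T) \<Longrightarrow> ssteps L a (TApp x T) \<or> (\<exists>x' T'. a = TApp x' T' \<and> Re L 0 x' x \<and> Rt L 0 T' T)"
  by (erule Re.cases) auto
lemma Re0R_Wait: "Re L 0 a (Wait T e x l) \<Longrightarrow> ssteps L a (Wait T e x l) \<or>
   (\<exists>T' e' x'. a = Wait T' e' x' l \<and> Rt L 0 T' T \<and> Re L 1 e' e \<and> Re L 0 x' x)"
  by (erule Re.cases) auto
lemma Re0R_Act: "Re L 0 a (Act T e x v l) \<Longrightarrow> ssteps L a (Act T e x v l) \<or>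
   (\<exists>T' e' x' v'. a = Act T' e' x' v' l \<and> Rt L 0 T' T \<and> Re L 1 e' e \<and> Re L 0 x' x \<and> Re L 0 v' v)"
  by (erule Re.cases) auto

lemma Re0R_Lam: "Re L 0 a (Lam T e) \<Longrightarrow> \<exists>T' e'. ssteps L a (Lam T' e') \<and> Rt L 0 T' T \<and> Re L 1 e' e"
  by (erule Re.cases) (auto intro: R_refl)
lemma Re0R_TLam: "Re L 0 a (TLam e) \<Longrightarrow> \<exists>e'. ssteps L a (TLam e') \<and> Re L 1 e' e"
  by (erule Re.cases) (auto intro: R_refl)
lemma Re0R_Cast: "Re L 0 a (Cast A B l) \<Longrightarrow> \<exists>A' B'. ssteps L a (Cast A' B' l) \<and> Rt L 0 A' A \<and> Rt L 0 B' B"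
  by (erule Re.cases) (auto intro: R_refl)
lemma Re0R_Const: "Re L 0 a (Const k) \<Longrightarrow> ssteps L a (Const k)"
  by (erule Re.cases) auto
lemma Re0R_Blame: "Re L 0 a (Blame l) \<Longrightarrow> ssteps L a (Blame l)"
  by (erule Re.cases) auto

lemma Re0R_val: "Re L 0 a b \<Longrightarrow> is_value b \<Longrightarrow> \<exists>a'. ssteps L a a' \<and> Re L 0 a' b \<and> is_value a'"
  by (erule Re.cases) (auto intro: R_refl Rt_Re.intros)

lemma ss_appL: "ssteps L e e' \<Longrightarrow> ssteps L (App e e2) (App e' e2)"
  by (induct rule: rtranclp_induct) (auto intro: rtranclp.rtrancl_into_rtrancl S_appL)
lemma ss_appR: "ssteps L e e' \<Longrightarrow> is_value v \<Longrightarrow> ssteps L (App v e) (App v e')"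
  by (induct rule: rtranclp_induct) (auto intro: rtranclp.rtrancl_into_rtrancl S_appR)
lemma ss_tapp: "ssteps L e e' \<Longrightarrow> ssteps L (TApp e T) (TApp e' T)"
  by (induct rule: rtranclp_induct) (auto intro: rtranclp.rtrancl_into_rtrancl S_tapp)
lemma ss_wait: "ssteps L e e' \<Longrightarrow> ssteps L (Wait T p e l) (Wait T p e' l)"
  by (induct rule: rtranclp_induct) (auto intro: rtranclp.rtrancl_into_rtrancl S_wait)
lemma ss_act: "ssteps L e e' \<Longrightarrow> ssteps L (Act T p e v l) (Act T p e' v l)"
  by (induct rule: rtranclp_induct) (auto intro: rtranclp.rtrancl_into_rtrancl S_act)
lemma ss_op: "ssteps L e e' \<Longrightarrow> \<forall>v\<in>set vs. is_value v \<Longrightarrow> ssteps L (Op p (vs @ e # es)) (Op p (vs @ e' # es))"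
  by (induct rule: rtranclp_induct) (auto intro: rtranclp.rtrancl_into_rtrancl S_op)

lemma G_A: "sstep L a a' \<Longrightarrow> lang_ok L \<Longrightarrow> ssteps L a b \<Longrightarrow> \<exists>b'. ssteps L b b' \<and> Re L 0 a' b'"
proof -
  assume s: "sstep L a a'" and ok: "lang_ok L" and ss: "ssteps L a b"
  from ss show ?thesis
  proof (cases rule: converse_rtranclpE)
    case base then show ?thesis using s by (auto intro: R_refl)
  next
    case (step a1)
    then have "a1 = a'" using sstep_det[OF s ok] by auto
    then show ?thesis using step by (auto intro: Re_leaf0)
  qed
qed

lemma G_B: "ssteps L a b \<Longrightarrow> sstep L b b' \<Longrightarrow> \<exists>a'. ssteps L a a' \<and> Re L 0 a' b'"
  by (auto intro: R_refl rtranclp.rtrancl_into_rtrancl)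


lemma Rt_inv:
  "Rt L n (TBase B) X \<Longrightarrow> X = TBase B"
  "Rt L n (TVar a) X \<Longrightarrow> X = TVar a"
  "Rt L n (TArr T1 T2) X \<Longrightarrow> \<exists>A B. X = TArr A B \<and> Rt L n T1 A \<and> Rt L (Suc n) T2 B"
  "Rt L n (TAll T) X \<Longrightarrow> \<exists>A. X = TAll A \<and> Rt L (Suc n) T A"
  "Rt L n (TRef T e) X \<Longrightarrow> \<exists>A e'. X = TRef A e' \<and> Rt L n T A \<and> Re L (Suc n) e e'"
  by (erule Rt.cases; auto)+

lemma Rt_invR:
  "Rt L n X (TBase B) \<Longrightarrow> X = TBase B"
  "Rt L n X (TVar a) \<Longrightarrow> X = TVar a"
  "Rt L n X (TArr T1 T2) \<Longrightarrow> \<exists>A B. X = TArr A B \<and> Rt L n A T1 \<and> Rt L (Suc n) B T2"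
  "Rt L n X (TAll T) \<Longrightarrow> \<exists>A. X = TAll A \<and> Rt L (Suc n) A T"
  "Rt L n X (TRef T e) \<Longrightarrow> \<exists>A e'. X = TRef A e' \<and> Rt L n A T \<and> Re L (Suc n) e' e"
  by (erule Rt.cases; auto)+

lemma Rt_is_ref: "Rt L n T T' \<Longrightarrow> is_ref T' = is_ref T"
  by (erule Rt.cases) auto

lemma list_all2_Re_Const: "list_all2 (Re L n) (map Const ks) es' \<Longrightarrow> es' = map Const ks"
  by (induct ks arbitrary: es') (auto simp: list_all2_Cons1 dest: Re_Const)

lemma list_all2_Re_Const_R: "list_all2 (Re L 0) es (map Const ks) \<Longrightarrow>
   list_all2 (ssteps L) es (map Const ks)"
  by (induct ks arbitrary: es) (auto simp: list_all2_Cons2 dest: Re0R_Const)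

lemma shifts_12:
  "Rt L n T T' \<Longrightarrow> Rt L (Suc n) (shiftT 0 1 T) (shiftT 0 1 T')"
  "Re L n e e' \<Longrightarrow> Re L (Suc (Suc n)) (shiftE 0 2 e) (shiftE 0 2 e')"
  "Rt L (Suc n) T T' \<Longrightarrow> Rt L (Suc (Suc n)) (shiftT 1 1 T) (shiftT 1 1 T')"
  "Rt L (Suc n) T T' \<Longrightarrow> Rt L (Suc (Suc n)) (shiftT 0 1 T) (shiftT 0 1 T')"
  "Re L n e e' \<Longrightarrow> Re L (Suc n) (shiftE 0 1 e) (shiftE 0 1 e')"
proof -
  show "Rt L n T T' \<Longrightarrow> Rt L (Suc n) (shiftT 0 1 T) (shiftT 0 1 T')"
    using R_shift(1)[of L n T T' 0 1] by simp
  show "Re L n e e' \<Longrightarrow> Re L (Suc (Suc n)) (shiftE 0 2 e) (shiftE 0 2 e')"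
    using R_shift(2)[of L n e e' 0 2] by (simp add: numeral_2_eq_2)
  show "Rt L (Suc n) T T' \<Longrightarrow> Rt L (Suc (Suc n)) (shiftT 1 1 T) (shiftT 1 1 T')"
    using R_shift(1)[of L "Suc n" T T' 1 1] by simp
  show "Rt L (Suc n) T T' \<Longrightarrow> Rt L (Suc (Suc n)) (shiftT 0 1 T) (shiftT 0 1 T')"
    using R_shift(1)[of L "Suc n" T T' 0 1] by simp
  show "Re L n e e' \<Longrightarrow> Re L (Suc n) (shiftE 0 1 e) (shiftE 0 1 e')"
    using R_shift(2)[of L n e e' 0 1] by simp
qed

lemma R_subst0:
  assumes "Re L (Suc 0) e e'" "Re L 0 v w" shows "Re L 0 (substE 0 v e) (substE 0 w e')"
proof -
  have "Re L (0 + 0) (substE 0 v e) (substE 0 w e')"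
    by (rule R_subst(2)[OF assms(1)]) (simp_all add: assms(2))
  then show ?thesis by simp
qed

lemma R_tsubst0:
  assumes "Re L (Suc 0) e e'" "Rt L 0 S S'" shows "Re L 0 (tsubstE 0 S e) (tsubstE 0 S' e')"
proof -
  have "Re L (0 + 0) (tsubstE 0 S e) (tsubstE 0 S' e')"
    by (rule R_tsubst(2)[OF assms(1)]) (simp_all add: assms(2))
  then show ?thesis by simp
qed

lemma SimA_red:
  assumes r: "red L a a'" and ok: "lang_ok L" and R: "Re L 0 a b"
  shows "\<exists>b'. ssteps L b b' \<and> Re L 0 a' b'"
  using r
proof (cases rule: red.cases)
  case (red_op p ks k)
  from R[unfolded red_op] show ?thesis
  proof (rule Re0L_Op[THEN disjE])
    assume "ssteps L (Op p (map Const ks)) b"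
    then show ?thesis using G_A[OF S_red[OF r] ok] red_op by auto
  next
    assume "\<exists>es'. b = Op p es' \<and> list_all2 (Re L 0) (map Const ks) es'"
    then have "b = a" using red_op by (auto dest: list_all2_Re_Const)
    then show ?thesis using r by (auto intro: R_refl S_red)
  qed
next
  case (red_beta v T e)
  from R[unfolded red_beta] show ?thesis
  proof (rule Re0L_App[THEN disjE])
    assume "ssteps L (App (Lam T e) v) b"
    then show ?thesis using G_A[OF S_red[OF r] ok] red_beta by auto
  next
    assume "\<exists>x' y'. b = App x' y' \<and> Re L 0 (Lam T e) x' \<and> Re L 0 v y'"
    then obtain T' e' y' where b: "b = App (Lam T' e') y'" "Re L (Suc 0) e e'" "Re L 0 v y'"
      by (auto dest!: Re_Lam)
    then have "is_value y'" using Re_val red_beta by blast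
    then have "sstep L b (substE 0 y' e')" using b by (auto intro: S_red red.intros)
    then show ?thesis using b red_beta by (auto intro!: R_subst0)
  qed
next
  case (red_tbeta e T)
  from R[unfolded red_tbeta] show ?thesis
  proof (rule Re0L_TApp[THEN disjE])
    assume "ssteps L (TApp (TLam e) T) b"
    then show ?thesis using G_A[OF S_red[OF r] ok] red_tbeta by auto
  next
    assume "\<exists>x' T'. b = TApp x' T' \<and> Re L 0 (TLam e) x' \<and> Rt L 0 T T'"
    then obtain e' T' where b: "b = TApp (TLam e') T'" "Re L (Suc 0) e e'" "Rt L 0 T T'"
      by (auto dest!: Re_TLam)
    then have "sstep L b (tsubstE 0 T' e')" by (auto intro: S_red red.intros)
    then show ?thesis using b red_tbeta by (auto intro!: R_tsubst0)
  qed
next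
  case (red_base B l)
  define v where "v = a'"
  note red_base = red_base[folded v_def]
  from R[unfolded red_base] show ?thesis
  proof (rule Re0L_App[THEN disjE])
    assume "ssteps L (App (Cast (TBase B) (TBase B) l) v) b"
    then show ?thesis using G_A[OF S_red[OF r] ok] red_base by auto
  next
    assume "\<exists>x' y'. b = App x' y' \<and> Re L 0 (Cast (TBase B) (TBase B) l) x' \<and> Re L 0 v y'"
    then obtain y' where b: "b = App (Cast (TBase B) (TBase B) l) y'" "Re L 0 v y'"
      by (auto dest!: Re_Cast Rt_inv)
    then have "is_value y'" using Re_val red_base by blast
    then have "sstep L b y'" using b by (auto intro: S_red red.intros)
    then show ?thesis using b red_base v_def by auto
  qed
next
  case (red_fun v T11 T12 T21 T22 l)
  from R[unfolded red_fun] show ?thesis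
  proof (rule Re0L_App[THEN disjE])
    assume "ssteps L (App (Cast (TArr T11 T12) (TArr T21 T22) l) v) b"
    then show ?thesis using G_A[OF S_red[OF r] ok] red_fun by auto
  next
    assume "\<exists>x' y'. b = App x' y' \<and> Re L 0 (Cast (TArr T11 T12) (TArr T21 T22) l) x' \<and> Re L 0 v y'"
    then obtain A1 A2 B1 B2 y' where b: "b = App (Cast (TArr A1 A2) (TArr B1 B2) l) y'" "Re L 0 v y'"
      "Rt L 0 T11 A1" "Rt L (Suc 0) T12 A2" "Rt L 0 T21 B1" "Rt L (Suc 0) T22 B2"
      by (auto dest!: Re_Cast Rt_inv)
    then have "is_value y'" using Re_val red_fun by blast
    then have "sstep L b (Lam B1
        (App (Lam (shiftT 0 1 A1)
                (App (Cast (shiftT 1 1 A2) (shiftT 0 1 B2) l)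
                     (App (shiftE 0 2 y') (Var 0))))
             (App (Cast (shiftT 0 1 B1) (shiftT 0 1 A1) l) (Var 0))))" unfolding b(1) by (rule S_red[OF red.red_fun])
    moreover have "Re L 0 a' (Lam B1
        (App (Lam (shiftT 0 1 A1)
                (App (Cast (shiftT 1 1 A2) (shiftT 0 1 B2) l)
                     (App (shiftE 0 2 y') (Var 0))))
             (App (Cast (shiftT 0 1 B1) (shiftT 0 1 A1) l) (Var 0))))"
      unfolding red_fun(2)
      by (intro R_lam R_app R_cast R_var shifts_12 b(2-))
    ultimately show ?thesis by blast
  qed
next
  case (red_forall v T1 T2 l)
  from R[unfolded red_forall] show ?thesis
  proof (rule Re0L_App[THEN disjE])
    assume "ssteps L (App (Cast (TAll T1) (TAll T2) l) v) b"
    then show ?thesis using G_A[OF S_red[OF r] ok] red_forall by auto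
  next
    assume "\<exists>x' y'. b = App x' y' \<and> Re L 0 (Cast (TAll T1) (TAll T2) l) x' \<and> Re L 0 v y'"
    then obtain A B y' where b: "b = App (Cast (TAll A) (TAll B) l) y'" "Re L 0 v y'"
      "Rt L (Suc 0) T1 A" "Rt L (Suc 0) T2 B"
      by (auto dest!: Re_Cast Rt_inv)
    then have "is_value y'" using Re_val red_forall by blast
    then have "sstep L b (TLam (App (Cast A B l) (TApp (shiftE 0 1 y') (TVar 0))))"
      unfolding b(1) by (rule S_red[OF red.red_forall])
    moreover have "Re L 0 a' (TLam (App (Cast A B l) (TApp (shiftE 0 1 y') (TVar 0))))"
      unfolding red_forall(2)
      by (intro R_tlam R_app R_cast R_tapp R_tvar shifts_12 b(2-))
    ultimately show ?thesis by blast
  qed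
next
  case (red_forget v T1 e1 T2 l)
  from R[unfolded red_forget] show ?thesis
  proof (rule Re0L_App[THEN disjE])
    assume "ssteps L (App (Cast (TRef T1 e1) T2 l) v) b"
    then show ?thesis using G_A[OF S_red[OF r] ok] red_forget by auto
  next
    assume "\<exists>x' y'. b = App x' y' \<and> Re L 0 (Cast (TRef T1 e1) T2 l) x' \<and> Re L 0 v y'"
    then obtain A e1' B y' where b: "b = App (Cast (TRef A e1') B l) y'" "Re L 0 v y'"
      "Rt L 0 T1 A" "Rt L 0 T2 B"
      by (auto dest!: Re_Cast Rt_inv)
    then have "is_value y'" using Re_val red_forget by blast
    then have "sstep L b (App (Cast A B l) y')"
      using b by (auto intro: S_red red.intros)
    then show ?thesis using b red_forget by (auto intro!: Rt_Re.intros)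
  qed
next
  case (red_precheck v T1 T2 e2 l)
  from R[unfolded red_precheck] show ?thesis
  proof (rule Re0L_App[THEN disjE])
    assume "ssteps L (App (Cast T1 (TRef T2 e2) l) v) b"
    then show ?thesis using G_A[OF S_red[OF r] ok] red_precheck by auto
  next
    assume "\<exists>x' y'. b = App x' y' \<and> Re L 0 (Cast T1 (TRef T2 e2) l) x' \<and> Re L 0 v y'"
    then obtain A B e2' y' where b: "b = App (Cast A (TRef B e2') l) y'" "Re L 0 v y'"
      "Rt L 0 T1 A" "Rt L 0 T2 B" "Re L (Suc 0) e2 e2'"
      by (auto dest!: Re_Cast Rt_inv)
    moreover have "\<not> is_ref A" using b(3) red_precheck Rt_is_ref by metis
    moreover have "is_value y'" using b Re_val red_precheck by blast
    ultimately have "sstep L b (Wait B e2' (App (Cast A B l) y') l)"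
      by (auto intro: S_red red.intros)
    then show ?thesis using b red_precheck by (auto intro!: Rt_Re.intros)
  qed
next
  case (red_check v T e l)
  from R[unfolded red_check] show ?thesis
  proof (rule Re0L_Wait[THEN disjE])
    assume "ssteps L (Wait T e v l) b"
    then show ?thesis using G_A[OF S_red[OF r] ok] red_check by auto
  next
    assume "\<exists>T' e' x'. b = Wait T' e' x' l \<and> Rt L 0 T T' \<and> Re L 1 e e' \<and> Re L 0 v x'"
    then obtain T' e' y' where b: "b = Wait T' e' y' l" "Rt L 0 T T'" "Re L (Suc 0) e e'" "Re L 0 v y'"
      by auto
    then have "is_value y'" using Re_val red_check by blast
    then have "sstep L b (Act T' e' (substE 0 y' e') y' l)"
      using b by (auto intro: S_red red.intros)
    then show ?thesis using b red_check by (auto intro!: Rt_Re.intros R_subst0)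
  qed
next
  case (red_ok T e l)
  define v where "v = a'"
  note red_ok = red_ok[folded v_def]
  from R[unfolded red_ok] show ?thesis
  proof (rule Re0L_Act[THEN disjE])
    assume "ssteps L (Act T e (Const (ktrue L)) v l) b"
    then show ?thesis using G_A[OF S_red[OF r] ok] red_ok by auto
  next
    assume "\<exists>T' e' x' v'. b = Act T' e' x' v' l \<and> Rt L 0 T T' \<and> Re L 1 e e' \<and>
      Re L 0 (Const (ktrue L)) x' \<and> Re L 0 v v'"
    then obtain T' e' v' where b: "b = Act T' e' (Const (ktrue L)) v' l" "Re L 0 v v'"
      by (auto dest!: Re_Const)
    then have "sstep L b v'" by (auto intro: S_red red.intros)
    then show ?thesis using b red_ok v_def by auto
  qed
next
  case (red_fail T e v l)
  from R[unfolded red_fail] show ?thesis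
  proof (rule Re0L_Act[THEN disjE])
    assume "ssteps L (Act T e (Const (kfalse L)) v l) b"
    then show ?thesis using G_A[OF S_red[OF r] ok] red_fail by auto
  next
    assume "\<exists>T' e' x' v'. b = Act T' e' x' v' l \<and> Rt L 0 T T' \<and> Re L 1 e e' \<and>
      Re L 0 (Const (kfalse L)) x' \<and> Re L 0 v v'"
    then obtain T' e' v' where b: "b = Act T' e' (Const (kfalse L)) v' l"
      by (auto dest!: Re_Const)
    then have "sstep L b (Blame l)" by (auto intro: S_red red.intros)
    then show ?thesis using b red_fail by (auto intro: R_refl)
  qed
qed


lemma list_all2_vals: "list_all2 (Re L n) vs bvs \<Longrightarrow> \<forall>v\<in>set vs. is_value v \<Longrightarrow> \<forall>v\<in>set bvs. is_value v"
  by (induct rule: list_all2_induct) (auto dest: Re_val)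

lemma list_all2_split:
  assumes "list_all2 P (vs @ e # es) bs"
  shows "\<exists>bvs be bes. bs = bvs @ be # bes \<and> list_all2 P vs bvs \<and> P e be \<and> list_all2 P es bes"
  using assms by (auto simp: list_all2_append1 list_all2_Cons1)

lemma SimA: "sstep L a a' \<Longrightarrow> lang_ok L \<Longrightarrow> Re L 0 a b \<Longrightarrow> \<exists>b'. ssteps L b b' \<and> Re L 0 a' b'"
proof (induct arbitrary: b rule: sstep.induct)
  case (S_red e e')
  then show ?case using SimA_red by blast
next
  case (S_op vs e e' p es)
  have st: "sstep L (Op p (vs @ e # es)) (Op p (vs @ e' # es))" using S_op(1,2) by (rule sstep.S_op)
  from S_op(5) show ?case
  proof (rule Re0L_Op[THEN disjE])
    assume "ssteps L (Op p (vs @ e # es)) b" then show ?thesis using G_A[OF st S_op(4)] by auto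
  next
    assume "\<exists>es'. b = Op p es' \<and> list_all2 (Re L 0) (vs @ e # es) es'"
    then obtain bvs be bes where b: "b = Op p (bvs @ be # bes)" "list_all2 (Re L 0) vs bvs"
      "Re L 0 e be" "list_all2 (Re L 0) es bes" by (auto dest!: list_all2_split)
    have vals: "\<forall>v\<in>set bvs. is_value v" using list_all2_vals[OF b(2) S_op(1)] .
    obtain be' where be: "ssteps L be be'" "Re L 0 e' be'" using S_op(3)[OF S_op(4) b(3)] by blast
    have "ssteps L b (Op p (bvs @ be' # bes))" unfolding b(1) by (rule ss_op[OF be(1) vals])
    moreover have "Re L 0 (Op p (vs @ e' # es)) (Op p (bvs @ be' # bes))"
      using b be by (auto intro!: R_op list_all2_appendI)
    ultimately show ?thesis by blast
  qed
next
  case (S_appL e e' e2)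
  have st: "sstep L (App e e2) (App e' e2)" using S_appL(1) by (rule sstep.S_appL)
  from S_appL(4) show ?case
  proof (rule Re0L_App[THEN disjE])
    assume "ssteps L (App e e2) b" then show ?thesis using G_A[OF st S_appL(3)] by auto
  next
    assume "\<exists>x' y'. b = App x' y' \<and> Re L 0 e x' \<and> Re L 0 e2 y'"
    then obtain x' y' where b: "b = App x' y'" "Re L 0 e x'" "Re L 0 e2 y'" by blast
    obtain x'' where x: "ssteps L x' x''" "Re L 0 e' x''" using S_appL(2)[OF S_appL(3) b(2)] by blast
    have "ssteps L b (App x'' y')" unfolding b(1) by (rule ss_appL[OF x(1)])
    moreover have "Re L 0 (App e' e2) (App x'' y')" using b x by (auto intro!: R_app)
    ultimately show ?thesis by blast
  qed
next
  case (S_appR v e e')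
  have st: "sstep L (App v e) (App v e')" using S_appR(1,2) by (rule sstep.S_appR)
  from S_appR(5) show ?case
  proof (rule Re0L_App[THEN disjE])
    assume "ssteps L (App v e) b" then show ?thesis using G_A[OF st S_appR(4)] by auto
  next
    assume "\<exists>x' y'. b = App x' y' \<and> Re L 0 v x' \<and> Re L 0 e y'"
    then obtain x' y' where b: "b = App x' y'" "Re L 0 v x'" "Re L 0 e y'" by blast
    have vx: "is_value x'" using Re_val[OF b(2) S_appR(1)] .
    obtain y'' where y: "ssteps L y' y''" "Re L 0 e' y''" using S_appR(3)[OF S_appR(4) b(3)] by blast
    have "ssteps L b (App x' y'')" unfolding b(1) by (rule ss_appR[OF y(1) vx])
    moreover have "Re L 0 (App v e') (App x' y'')" using b y by (auto intro!: R_app)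
    ultimately show ?thesis by blast
  qed
next
  case (S_tapp e e' T)
  have st: "sstep L (TApp e T) (TApp e' T)" using S_tapp(1) by (rule sstep.S_tapp)
  from S_tapp(4) show ?case
  proof (rule Re0L_TApp[THEN disjE])
    assume "ssteps L (TApp e T) b" then show ?thesis using G_A[OF st S_tapp(3)] by auto
  next
    assume "\<exists>x' T'. b = TApp x' T' \<and> Re L 0 e x' \<and> Rt L 0 T T'"
    then obtain x' T' where b: "b = TApp x' T'" "Re L 0 e x'" "Rt L 0 T T'" by blast
    obtain x'' where x: "ssteps L x' x''" "Re L 0 e' x''" using S_tapp(2)[OF S_tapp(3) b(2)] by blast
    have "ssteps L b (TApp x'' T')" unfolding b(1) by (rule ss_tapp[OF x(1)])
    moreover have "Re L 0 (TApp e' T) (TApp x'' T')" using b x by (auto intro!: R_tapp)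
    ultimately show ?thesis by blast
  qed
next
  case (S_wait e e' T p l)
  have st: "sstep L (Wait T p e l) (Wait T p e' l)" using S_wait(1) by (rule sstep.S_wait)
  from S_wait(4) show ?case
  proof (rule Re0L_Wait[THEN disjE])
    assume "ssteps L (Wait T p e l) b" then show ?thesis using G_A[OF st S_wait(3)] by auto
  next
    assume "\<exists>T' e2 x'. b = Wait T' e2 x' l \<and> Rt L 0 T T' \<and> Re L 1 p e2 \<and> Re L 0 e x'"
    then obtain T' p' x' where b: "b = Wait T' p' x' l" "Rt L 0 T T'" "Re L 1 p p'" "Re L 0 e x'" by blast
    obtain x'' where x: "ssteps L x' x''" "Re L 0 e' x''" using S_wait(2)[OF S_wait(3) b(4)] by blast
    have "ssteps L b (Wait T' p' x'' l)" unfolding b(1) by (rule ss_wait[OF x(1)])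
    moreover have "Re L 0 (Wait T p e' l) (Wait T' p' x'' l)" using b x by (auto intro!: R_wait)
    ultimately show ?thesis by blast
  qed
next
  case (S_act e e' T p v l)
  have st: "sstep L (Act T p e v l) (Act T p e' v l)" using S_act(1) by (rule sstep.S_act)
  from S_act(4) show ?case
  proof (rule Re0L_Act[THEN disjE])
    assume "ssteps L (Act T p e v l) b" then show ?thesis using G_A[OF st S_act(3)] by auto
  next
    assume "\<exists>T' e2 x' v'. b = Act T' e2 x' v' l \<and> Rt L 0 T T' \<and> Re L 1 p e2 \<and> Re L 0 e x' \<and> Re L 0 v v'"
    then obtain T' p' x' v' where b: "b = Act T' p' x' v' l" "Rt L 0 T T'" "Re L 1 p p'" "Re L 0 e x'" "Re L 0 v v'" by blast
    obtain x'' where x: "ssteps L x' x''" "Re L 0 e' x''" using S_act(2)[OF S_act(3) b(4)] by blast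
    have "ssteps L b (Act T' p' x'' v' l)" unfolding b(1) by (rule ss_act[OF x(1)])
    moreover have "Re L 0 (Act T p e' v l) (Act T' p' x'' v' l)" using b x by (auto intro!: R_act)
    ultimately show ?thesis by blast
  qed
next
  case (B_op vs p l es)
  have st: "sstep L (Op p (vs @ Blame l # es)) (Blame l)" using B_op(1) by (rule sstep.B_op)
  from B_op(3) show ?case
  proof (rule Re0L_Op[THEN disjE])
    assume "ssteps L (Op p (vs @ Blame l # es)) b" then show ?thesis using G_A[OF st B_op(2)] by auto
  next
    assume "\<exists>es'. b = Op p es' \<and> list_all2 (Re L 0) (vs @ Blame l # es) es'"
    then obtain bvs be bes where b: "b = Op p (bvs @ be # bes)" "list_all2 (Re L 0) vs bvs"
      "Re L 0 (Blame l) be" by (auto dest!: list_all2_split)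
    have vals: "\<forall>v\<in>set bvs. is_value v" using list_all2_vals[OF b(2) B_op(1)] .
    have "sstep L b (Blame l)" using b(1) Re_Blame[OF b(3)] vals by (auto intro: sstep.B_op)
    then show ?thesis by (auto intro: R_blame)
  qed
next
  case (B_appL l e2)
  have st: "sstep L (App (Blame l) e2) (Blame l)" by (rule sstep.B_appL)
  from B_appL(2) show ?case
  proof (rule Re0L_App[THEN disjE])
    assume "ssteps L (App (Blame l) e2) b" then show ?thesis using G_A[OF st B_appL(1)] by auto
  next
    assume "\<exists>x' y'. b = App x' y' \<and> Re L 0 (Blame l) x' \<and> Re L 0 e2 y'"
    then have "sstep L b (Blame l)" by (auto dest!: Re_Blame intro: sstep.B_appL)
    then show ?thesis by (auto intro: R_blame)
  qed
next
  case (B_appR v l)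
  have st: "sstep L (App v (Blame l)) (Blame l)" using B_appR(1) by (rule sstep.B_appR)
  from B_appR(3) show ?case
  proof (rule Re0L_App[THEN disjE])
    assume "ssteps L (App v (Blame l)) b" then show ?thesis using G_A[OF st B_appR(2)] by auto
  next
    assume "\<exists>x' y'. b = App x' y' \<and> Re L 0 v x' \<and> Re L 0 (Blame l) y'"
    then have "sstep L b (Blame l)" using B_appR(1) by (auto dest!: Re_Blame dest: Re_val intro: sstep.B_appR)
    then show ?thesis by (auto intro: R_blame)
  qed
next
  case (B_tapp l T)
  have st: "sstep L (TApp (Blame l) T) (Blame l)" by (rule sstep.B_tapp)
  from B_tapp(2) show ?case
  proof (rule Re0L_TApp[THEN disjE])
    assume "ssteps L (TApp (Blame l) T) b" then show ?thesis using G_A[OF st B_tapp(1)] by auto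
  next
    assume "\<exists>x' T'. b = TApp x' T' \<and> Re L 0 (Blame l) x' \<and> Rt L 0 T T'"
    then have "sstep L b (Blame l)" by (auto dest!: Re_Blame intro: sstep.B_tapp)
    then show ?thesis by (auto intro: R_blame)
  qed
next
  case (B_wait T p l l')
  have st: "sstep L (Wait T p (Blame l) l') (Blame l)" by (rule sstep.B_wait)
  from B_wait(2) show ?case
  proof (rule Re0L_Wait[THEN disjE])
    assume "ssteps L (Wait T p (Blame l) l') b" then show ?thesis using G_A[OF st B_wait(1)] by auto
  next
    assume "\<exists>T' e2 x'. b = Wait T' e2 x' l' \<and> Rt L 0 T T' \<and> Re L 1 p e2 \<and> Re L 0 (Blame l) x'"
    then have "sstep L b (Blame l)" by (auto dest!: Re_Blame intro: sstep.B_wait)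
    then show ?thesis by (auto intro: R_blame)
  qed
next
  case (B_act T p l v l')
  have st: "sstep L (Act T p (Blame l) v l') (Blame l)" by (rule sstep.B_act)
  from B_act(2) show ?case
  proof (rule Re0L_Act[THEN disjE])
    assume "ssteps L (Act T p (Blame l) v l') b" then show ?thesis using G_A[OF st B_act(1)] by auto
  next
    assume "\<exists>T' e2 x' v'. b = Act T' e2 x' v' l' \<and> Rt L 0 T T' \<and> Re L 1 p e2 \<and> Re L 0 (Blame l) x' \<and> Re L 0 v v'"
    then have "sstep L b (Blame l)" by (auto dest!: Re_Blame intro: sstep.B_act)
    then show ?thesis by (auto intro: R_blame)
  qed
qed


lemma list_MV:
  "list_all2 (Re L 0) as ws \<Longrightarrow> \<forall>w\<in>set ws. is_value w \<Longrightarrow>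
   \<exists>as'. list_all2 (ssteps L) as as' \<and> list_all2 (Re L 0) as' ws \<and> (\<forall>v\<in>set as'. is_value v)"
proof (induct rule: list_all2_induct)
  case Nil then show ?case by auto
next
  case (Cons a as w ws)
  obtain a' where a: "ssteps L a a'" "Re L 0 a' w" "is_value a'" using Re0R_val[OF Cons(1)] Cons(4) by auto
  obtain as' where "list_all2 (ssteps L) as as'" "list_all2 (Re L 0) as' ws" "\<forall>v\<in>set as'. is_value v"
    using Cons by auto
  then show ?case using a by (intro exI[of _ "a' # as'"]) auto
qed

lemma ss_op_list:
  "list_all2 (ssteps L) as as' \<Longrightarrow> \<forall>v\<in>set as'. is_value v \<Longrightarrow> \<forall>v\<in>set pre. is_value v \<Longrightarrow>
   ssteps L (Op p (pre @ as @ rest)) (Op p (pre @ as' @ rest))"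
proof (induct arbitrary: pre rule: list_all2_induct)
  case Nil then show ?case by auto
next
  case (Cons a as a' as')
  have "ssteps L (Op p (pre @ a # (as @ rest))) (Op p (pre @ a' # (as @ rest)))"
    using Cons by (intro ss_op) auto
  moreover have "ssteps L (Op p ((pre @ [a']) @ as @ rest)) (Op p ((pre @ [a']) @ as' @ rest))"
    using Cons by (intro Cons(3)) auto
  ultimately show ?case by auto
qed

lemma list_all2_split2:
  assumes "list_all2 P bs (vs @ e # es)"
  shows "\<exists>bvs be bes. bs = bvs @ be # bes \<and> list_all2 P bvs vs \<and> P be e \<and> list_all2 P bes es"
  using assms by (auto simp: list_all2_append2 list_all2_Cons2)

lemma SimB_red:
  assumes r: "red L b b'" and R: "Re L 0 a b"
  shows "\<exists>a'. ssteps L a a' \<and> Re L 0 a' b'"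
  using r
proof (cases rule: red.cases)
  case (red_op p ks k)
  from R[unfolded red_op] show ?thesis
  proof (rule Re0R_Op[THEN disjE])
    assume "ssteps L a (Op p (map Const ks))" then show ?thesis using G_B S_red r red_op by metis
  next
    assume "\<exists>es'. a = Op p es' \<and> list_all2 (Re L 0) es' (map Const ks)"
    then obtain as where a: "a = Op p as" "list_all2 (ssteps L) as (map Const ks)"
      by (auto dest: list_all2_Re_Const_R)
    have "ssteps L (Op p ([] @ as @ [])) (Op p ([] @ map Const ks @ []))"
      by (rule ss_op_list[OF a(2)]) auto
    then have "ssteps L a b'" using a(1) r red_op
      by (auto intro: rtranclp.rtrancl_into_rtrancl S_red)
    then show ?thesis by (auto intro: R_refl)
  qed
next
  case (red_beta v T e)
  from R[unfolded red_beta] show ?thesis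
  proof (rule Re0R_App[THEN disjE])
    assume "ssteps L a (App (Lam T e) v)" then show ?thesis using G_B S_red r red_beta by metis
  next
    assume "\<exists>x' y'. a = App x' y' \<and> Re L 0 x' (Lam T e) \<and> Re L 0 y' v"
    then obtain x y where a: "a = App x y" "Re L 0 x (Lam T e)" "Re L 0 y v" by blast
    obtain T' e' where x: "ssteps L x (Lam T' e')" "Re L 1 e' e" using Re0R_Lam[OF a(2)] by blast
    obtain y' where y: "ssteps L y y'" "Re L 0 y' v" "is_value y'" using Re0R_val[OF a(3)] red_beta by blast
    have "ssteps L a (App (Lam T' e') y')" unfolding a(1)
      using ss_appL[OF x(1)] ss_appR[OF y(1)] by (meson is_value.simps(4) rtranclp_trans)
    then have "ssteps L a (substE 0 y' e')" using y(3) by (auto intro: rtranclp.rtrancl_into_rtrancl S_red red.intros)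
    then show ?thesis using red_beta x y by (auto intro: R_subst0)
  qed
next
  case (red_tbeta e T)
  from R[unfolded red_tbeta] show ?thesis
  proof (rule Re0R_TApp[THEN disjE])
    assume "ssteps L a (TApp (TLam e) T)" then show ?thesis using G_B S_red r red_tbeta by metis
  next
    assume "\<exists>x' T'. a = TApp x' T' \<and> Re L 0 x' (TLam e) \<and> Rt L 0 T' T"
    then obtain x T' where a: "a = TApp x T'" "Re L 0 x (TLam e)" "Rt L 0 T' T" by blast
    obtain e' where x: "ssteps L x (TLam e')" "Re L 1 e' e" using Re0R_TLam[OF a(2)] by blast
    have "ssteps L a (TApp (TLam e') T')" unfolding a(1) using ss_tapp[OF x(1)] .
    then have "ssteps L a (tsubstE 0 T' e')" by (auto intro: rtranclp.rtrancl_into_rtrancl S_red red.intros)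
    then show ?thesis using red_tbeta x a by (auto intro: R_tsubst0)
  qed
next
  case (red_base B l)
  from R[unfolded red_base] show ?thesis
  proof (rule Re0R_App[THEN disjE])
    assume "ssteps L a (App (Cast (TBase B) (TBase B) l) b')" then show ?thesis using G_B S_red r red_base by metis
  next
    assume "\<exists>x' y'. a = App x' y' \<and> Re L 0 x' (Cast (TBase B) (TBase B) l) \<and> Re L 0 y' b'"
    then obtain x y where a: "a = App x y" "Re L 0 x (Cast (TBase B) (TBase B) l)" "Re L 0 y b'" by blast
    have x: "ssteps L x (Cast (TBase B) (TBase B) l)" using Re0R_Cast[OF a(2)] by (auto dest!: Rt_invR)
    obtain y' where y: "ssteps L y y'" "Re L 0 y' b'" "is_value y'" using Re0R_val[OF a(3)] red_base by blast
    have "ssteps L a (App (Cast (TBase B) (TBase B) l) y')" unfolding a(1)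
      using ss_appL[OF x] ss_appR[OF y(1)] by (meson is_value.simps(6) rtranclp_trans)
    then have "ssteps L a y'" using y(3) by (auto intro: rtranclp.rtrancl_into_rtrancl S_red red.intros)
    then show ?thesis using y by auto
  qed
next
  case (red_fun v T11 T12 T21 T22 l)
  from R[unfolded red_fun] show ?thesis
  proof (rule Re0R_App[THEN disjE])
    assume "ssteps L a (App (Cast (TArr T11 T12) (TArr T21 T22) l) v)" then show ?thesis using G_B S_red r red_fun by metis
  next
    assume "\<exists>x' y'. a = App x' y' \<and> Re L 0 x' (Cast (TArr T11 T12) (TArr T21 T22) l) \<and> Re L 0 y' v"
    then obtain x y where a: "a = App x y" "Re L 0 x (Cast (TArr T11 T12) (TArr T21 T22) l)" "Re L 0 y v" by blast
    obtain A1 A2 B1 B2 where x: "ssteps L x (Cast (TArr A1 A2) (TArr B1 B2) l)"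
      "Rt L 0 A1 T11" "Rt L (Suc 0) A2 T12" "Rt L 0 B1 T21" "Rt L (Suc 0) B2 T22"
      using Re0R_Cast[OF a(2)] by (auto dest!: Rt_invR)
    obtain y' where y: "ssteps L y y'" "Re L 0 y' v" "is_value y'" using Re0R_val[OF a(3)] red_fun by blast
    have "ssteps L a (App (Cast (TArr A1 A2) (TArr B1 B2) l) y')" unfolding a(1)
      using ss_appL[OF x(1)] ss_appR[OF y(1)] by (meson is_value.simps(6) rtranclp_trans)
    moreover have "sstep L (App (Cast (TArr A1 A2) (TArr B1 B2) l) y') (Lam B1
        (App (Lam (shiftT 0 1 A1)
                (App (Cast (shiftT 1 1 A2) (shiftT 0 1 B2) l)
                     (App (shiftE 0 2 y') (Var 0))))
             (App (Cast (shiftT 0 1 B1) (shiftT 0 1 A1) l) (Var 0))))"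
      by (rule S_red[OF red.red_fun]) (rule y(3))
    moreover have "Re L 0 (Lam B1
        (App (Lam (shiftT 0 1 A1)
                (App (Cast (shiftT 1 1 A2) (shiftT 0 1 B2) l)
                     (App (shiftE 0 2 y') (Var 0))))
             (App (Cast (shiftT 0 1 B1) (shiftT 0 1 A1) l) (Var 0)))) b'"
      unfolding red_fun(2)
      by (intro R_lam R_app R_cast R_var shifts_12 x(2-) y(2))
    ultimately show ?thesis by (meson rtranclp.rtrancl_into_rtrancl)
  qed
next
  case (red_forall v T1 T2 l)
  from R[unfolded red_forall] show ?thesis
  proof (rule Re0R_App[THEN disjE])
    assume "ssteps L a (App (Cast (TAll T1) (TAll T2) l) v)" then show ?thesis using G_B S_red r red_forall by metis
  next
    assume "\<exists>x' y'. a = App x' y' \<and> Re L 0 x' (Cast (TAll T1) (TAll T2) l) \<and> Re L 0 y' v"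
    then obtain x y where a: "a = App x y" "Re L 0 x (Cast (TAll T1) (TAll T2) l)" "Re L 0 y v" by blast
    obtain A B where x: "ssteps L x (Cast (TAll A) (TAll B) l)" "Rt L (Suc 0) A T1" "Rt L (Suc 0) B T2"
      using Re0R_Cast[OF a(2)] by (auto dest!: Rt_invR)
    obtain y' where y: "ssteps L y y'" "Re L 0 y' v" "is_value y'" using Re0R_val[OF a(3)] red_forall by blast
    have "ssteps L a (App (Cast (TAll A) (TAll B) l) y')" unfolding a(1)
      using ss_appL[OF x(1)] ss_appR[OF y(1)] by (meson is_value.simps(6) rtranclp_trans)
    moreover have "sstep L (App (Cast (TAll A) (TAll B) l) y') (TLam (App (Cast A B l) (TApp (shiftE 0 1 y') (TVar 0))))"
      by (rule S_red[OF red.red_forall]) (rule y(3))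
    moreover have "Re L 0 (TLam (App (Cast A B l) (TApp (shiftE 0 1 y') (TVar 0)))) b'"
      unfolding red_forall(2)
      by (intro R_tlam R_app R_cast R_tapp R_tvar shifts_12 x(2-) y(2))
    ultimately show ?thesis by (meson rtranclp.rtrancl_into_rtrancl)
  qed
next
  case (red_forget v T1 e1 T2 l)
  from R[unfolded red_forget] show ?thesis
  proof (rule Re0R_App[THEN disjE])
    assume "ssteps L a (App (Cast (TRef T1 e1) T2 l) v)" then show ?thesis using G_B S_red r red_forget by metis
  next
    assume "\<exists>x' y'. a = App x' y' \<and> Re L 0 x' (Cast (TRef T1 e1) T2 l) \<and> Re L 0 y' v"
    then obtain x y where a: "a = App x y" "Re L 0 x (Cast (TRef T1 e1) T2 l)" "Re L 0 y v" by blast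
    obtain A e1' B where x: "ssteps L x (Cast (TRef A e1') B l)" "Rt L 0 A T1" "Rt L 0 B T2"
      using Re0R_Cast[OF a(2)] by (auto dest!: Rt_invR)
    obtain y' where y: "ssteps L y y'" "Re L 0 y' v" "is_value y'" using Re0R_val[OF a(3)] red_forget by blast
    have "ssteps L a (App (Cast (TRef A e1') B l) y')" unfolding a(1)
      using ss_appL[OF x(1)] ss_appR[OF y(1)] by (meson is_value.simps(6) rtranclp_trans)
    moreover have "sstep L (App (Cast (TRef A e1') B l) y') (App (Cast A B l) y')"
      by (rule S_red[OF red.red_forget]) (rule y(3))
    moreover have "Re L 0 (App (Cast A B l) y') b'"
      unfolding red_forget(2) by (intro R_app R_cast x(2-) y(2))
    ultimately show ?thesis by (meson rtranclp.rtrancl_into_rtrancl)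
  qed
next
  case (red_precheck v T1 T2 e2 l)
  from R[unfolded red_precheck] show ?thesis
  proof (rule Re0R_App[THEN disjE])
    assume "ssteps L a (App (Cast T1 (TRef T2 e2) l) v)" then show ?thesis using G_B S_red r red_precheck by metis
  next
    assume "\<exists>x' y'. a = App x' y' \<and> Re L 0 x' (Cast T1 (TRef T2 e2) l) \<and> Re L 0 y' v"
    then obtain x y where a: "a = App x y" "Re L 0 x (Cast T1 (TRef T2 e2) l)" "Re L 0 y v" by blast
    obtain A B e2' where x: "ssteps L x (Cast A (TRef B e2') l)" "Rt L 0 A T1" "Rt L 0 B T2" "Re L (Suc 0) e2' e2"
      using Re0R_Cast[OF a(2)] by (auto dest!: Rt_invR)
    obtain y' where y: "ssteps L y y'" "Re L 0 y' v" "is_value y'" using Re0R_val[OF a(3)] red_precheck by blast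
    have nr: "\<not> is_ref A" using x(2) red_precheck Rt_is_ref by metis
    have "ssteps L a (App (Cast A (TRef B e2') l) y')" unfolding a(1)
      using ss_appL[OF x(1)] ss_appR[OF y(1)] by (meson is_value.simps(6) rtranclp_trans)
    moreover have "sstep L (App (Cast A (TRef B e2') l) y') (Wait B e2' (App (Cast A B l) y') l)"
      by (rule S_red[OF red.red_precheck]) (rule y(3), rule nr)
    moreover have "Re L 0 (Wait B e2' (App (Cast A B l) y') l) b'"
      unfolding red_precheck(2) by (intro R_wait R_app R_cast x(2-) y(2))
    ultimately show ?thesis by (meson rtranclp.rtrancl_into_rtrancl)
  qed
next
  case (red_check v T e l)
  from R[unfolded red_check] show ?thesis
  proof (rule Re0R_Wait[THEN disjE])
    assume "ssteps L a (Wait T e v l)" then show ?thesis using G_B S_red r red_check by metis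
  next
    assume "\<exists>T' e' x'. a = Wait T' e' x' l \<and> Rt L 0 T' T \<and> Re L 1 e' e \<and> Re L 0 x' v"
    then obtain T' e' y where a: "a = Wait T' e' y l" "Rt L 0 T' T" "Re L (Suc 0) e' e" "Re L 0 y v" by auto
    obtain y' where y: "ssteps L y y'" "Re L 0 y' v" "is_value y'" using Re0R_val[OF a(4)] red_check by blast
    have "ssteps L a (Wait T' e' y' l)" unfolding a(1) by (rule ss_wait[OF y(1)])
    moreover have "sstep L (Wait T' e' y' l) (Act T' e' (substE 0 y' e') y' l)"
      by (rule S_red[OF red.red_check]) (rule y(3))
    moreover have "Re L 0 (Act T' e' (substE 0 y' e') y' l) b'"
      unfolding red_check(2) by (intro R_act R_subst0 a(2-) y(2))
    ultimately show ?thesis by (meson rtranclp.rtrancl_into_rtrancl)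
  qed
next
  case (red_ok T e l)
  from R[unfolded red_ok] show ?thesis
  proof (rule Re0R_Act[THEN disjE])
    assume "ssteps L a (Act T e (Const (ktrue L)) b' l)" then show ?thesis using G_B S_red r red_ok by metis
  next
    assume "\<exists>T' e' x' v'. a = Act T' e' x' v' l \<and> Rt L 0 T' T \<and> Re L 1 e' e \<and> Re L 0 x' (Const (ktrue L)) \<and> Re L 0 v' b'"
    then obtain T' e' x v' where a: "a = Act T' e' x v' l" "Re L 0 x (Const (ktrue L))" "Re L 0 v' b'" by blast
    have "ssteps L a (Act T' e' (Const (ktrue L)) v' l)" unfolding a(1) by (rule ss_act[OF Re0R_Const[OF a(2)]])
    then have "ssteps L a v'" by (auto intro: rtranclp.rtrancl_into_rtrancl S_red red.intros)
    then show ?thesis using a by auto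
  qed
next
  case (red_fail T e v l)
  from R[unfolded red_fail] show ?thesis
  proof (rule Re0R_Act[THEN disjE])
    assume "ssteps L a (Act T e (Const (kfalse L)) v l)" then show ?thesis using G_B S_red r red_fail by metis
  next
    assume "\<exists>T' e' x' v'. a = Act T' e' x' v' l \<and> Rt L 0 T' T \<and> Re L 1 e' e \<and> Re L 0 x' (Const (kfalse L)) \<and> Re L 0 v' v"
    then obtain T' e' x v' where a: "a = Act T' e' x v' l" "Re L 0 x (Const (kfalse L))" by blast
    have "ssteps L a (Act T' e' (Const (kfalse L)) v' l)" unfolding a(1) by (rule ss_act[OF Re0R_Const[OF a(2)]])
    then have "ssteps L a (Blame l)" by (auto intro: rtranclp.rtrancl_into_rtrancl S_red red.intros)
    then show ?thesis using red_fail by (auto intro: R_refl)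
  qed
qed


lemma ss_trans3: "ssteps L a b \<Longrightarrow> ssteps L b c \<Longrightarrow> ssteps L a c" by (rule rtranclp_trans)

lemma SimB: "sstep L b b' \<Longrightarrow> Re L 0 a b \<Longrightarrow> \<exists>a'. ssteps L a a' \<and> Re L 0 a' b'"
proof (induct arbitrary: a rule: sstep.induct)
  case (S_red e e')
  then show ?case using SimB_red by blast
next
  case (S_op vs e e' p es)
  have st: "sstep L (Op p (vs @ e # es)) (Op p (vs @ e' # es))" using S_op(1,2) by (rule sstep.S_op)
  from S_op(4) show ?case
  proof (rule Re0R_Op[THEN disjE])
    assume "ssteps L a (Op p (vs @ e # es))" then show ?thesis using G_B[OF _ st] by auto
  next
    assume "\<exists>es'. a = Op p es' \<and> list_all2 (Re L 0) es' (vs @ e # es)"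
    then obtain avs ae aes where a: "a = Op p (avs @ ae # aes)" "list_all2 (Re L 0) avs vs"
      "Re L 0 ae e" "list_all2 (Re L 0) aes es" by (auto dest!: list_all2_split2)
    obtain avs' where avs: "list_all2 (ssteps L) avs avs'" "list_all2 (Re L 0) avs' vs" "\<forall>v\<in>set avs'. is_value v"
      using list_MV[OF a(2) S_op(1)] by blast
    obtain ae' where ae: "ssteps L ae ae'" "Re L 0 ae' e'" using S_op(3)[OF a(3)] by blast
    have "ssteps L a (Op p ([] @ avs' @ (ae # aes)))" unfolding a(1)
      using ss_op_list[OF avs(1) avs(3), of "[]" p "ae # aes"] by simp
    moreover have "ssteps L (Op p (avs' @ ae # aes)) (Op p (avs' @ ae' # aes))"
      by (rule ss_op[OF ae(1) avs(3)])
    ultimately have "ssteps L a (Op p (avs' @ ae' # aes))" by simp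
    moreover have "Re L 0 (Op p (avs' @ ae' # aes)) (Op p (vs @ e' # es))"
      using avs ae a by (auto intro!: R_op list_all2_appendI)
    ultimately show ?thesis by blast
  qed
next
  case (S_appL e e' e2)
  have st: "sstep L (App e e2) (App e' e2)" using S_appL(1) by (rule sstep.S_appL)
  from S_appL(3) show ?case
  proof (rule Re0R_App[THEN disjE])
    assume "ssteps L a (App e e2)" then show ?thesis using G_B[OF _ st] by auto
  next
    assume "\<exists>x' y'. a = App x' y' \<and> Re L 0 x' e \<and> Re L 0 y' e2"
    then obtain x y where a: "a = App x y" "Re L 0 x e" "Re L 0 y e2" by blast
    obtain x' where x: "ssteps L x x'" "Re L 0 x' e'" using S_appL(2)[OF a(2)] by blast
    have "ssteps L a (App x' y)" unfolding a(1) by (rule ss_appL[OF x(1)])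
    moreover have "Re L 0 (App x' y) (App e' e2)" using a x by (auto intro!: R_app)
    ultimately show ?thesis by blast
  qed
next
  case (S_appR v e e')
  have st: "sstep L (App v e) (App v e')" using S_appR(1,2) by (rule sstep.S_appR)
  from S_appR(4) show ?case
  proof (rule Re0R_App[THEN disjE])
    assume "ssteps L a (App v e)" then show ?thesis using G_B[OF _ st] by auto
  next
    assume "\<exists>x' y'. a = App x' y' \<and> Re L 0 x' v \<and> Re L 0 y' e"
    then obtain x y where a: "a = App x y" "Re L 0 x v" "Re L 0 y e" by blast
    obtain x' where x: "ssteps L x x'" "Re L 0 x' v" "is_value x'" using Re0R_val[OF a(2) S_appR(1)] by blast
    obtain y' where y: "ssteps L y y'" "Re L 0 y' e'" using S_appR(3)[OF a(3)] by blast
    have "ssteps L a (App x' y')" unfolding a(1)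
      using ss_appL[OF x(1)] ss_appR[OF y(1) x(3)] by (rule ss_trans3)
    moreover have "Re L 0 (App x' y') (App v e')" using x y by (auto intro!: R_app)
    ultimately show ?thesis by blast
  qed
next
  case (S_tapp e e' T)
  have st: "sstep L (TApp e T) (TApp e' T)" using S_tapp(1) by (rule sstep.S_tapp)
  from S_tapp(3) show ?case
  proof (rule Re0R_TApp[THEN disjE])
    assume "ssteps L a (TApp e T)" then show ?thesis using G_B[OF _ st] by auto
  next
    assume "\<exists>x' T'. a = TApp x' T' \<and> Re L 0 x' e \<and> Rt L 0 T' T"
    then obtain x T' where a: "a = TApp x T'" "Re L 0 x e" "Rt L 0 T' T" by blast
    obtain x' where x: "ssteps L x x'" "Re L 0 x' e'" using S_tapp(2)[OF a(2)] by blast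
    have "ssteps L a (TApp x' T')" unfolding a(1) by (rule ss_tapp[OF x(1)])
    moreover have "Re L 0 (TApp x' T') (TApp e' T)" using a x by (auto intro!: R_tapp)
    ultimately show ?thesis by blast
  qed
next
  case (S_wait e e' T p l)
  have st: "sstep L (Wait T p e l) (Wait T p e' l)" using S_wait(1) by (rule sstep.S_wait)
  from S_wait(3) show ?case
  proof (rule Re0R_Wait[THEN disjE])
    assume "ssteps L a (Wait T p e l)" then show ?thesis using G_B[OF _ st] by auto
  next
    assume "\<exists>T' e2 x'. a = Wait T' e2 x' l \<and> Rt L 0 T' T \<and> Re L 1 e2 p \<and> Re L 0 x' e"
    then obtain T' p' x where a: "a = Wait T' p' x l" "Rt L 0 T' T" "Re L 1 p' p" "Re L 0 x e" by blast
    obtain x' where x: "ssteps L x x'" "Re L 0 x' e'" using S_wait(2)[OF a(4)] by blast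
    have "ssteps L a (Wait T' p' x' l)" unfolding a(1) by (rule ss_wait[OF x(1)])
    moreover have "Re L 0 (Wait T' p' x' l) (Wait T p e' l)" using a x by (auto intro!: R_wait)
    ultimately show ?thesis by blast
  qed
next
  case (S_act e e' T p v l)
  have st: "sstep L (Act T p e v l) (Act T p e' v l)" using S_act(1) by (rule sstep.S_act)
  from S_act(3) show ?case
  proof (rule Re0R_Act[THEN disjE])
    assume "ssteps L a (Act T p e v l)" then show ?thesis using G_B[OF _ st] by auto
  next
    assume "\<exists>T' e2 x' v'. a = Act T' e2 x' v' l \<and> Rt L 0 T' T \<and> Re L 1 e2 p \<and> Re L 0 x' e \<and> Re L 0 v' v"
    then obtain T' p' x v' where a: "a = Act T' p' x v' l" "Rt L 0 T' T" "Re L 1 p' p" "Re L 0 x e" "Re L 0 v' v" by blast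
    obtain x' where x: "ssteps L x x'" "Re L 0 x' e'" using S_act(2)[OF a(4)] by blast
    have "ssteps L a (Act T' p' x' v' l)" unfolding a(1) by (rule ss_act[OF x(1)])
    moreover have "Re L 0 (Act T' p' x' v' l) (Act T p e' v l)" using a x by (auto intro!: R_act)
    ultimately show ?thesis by blast
  qed
next
  case (B_op vs p l es)
  have st: "sstep L (Op p (vs @ Blame l # es)) (Blame l)" using B_op(1) by (rule sstep.B_op)
  from B_op(2) show ?case
  proof (rule Re0R_Op[THEN disjE])
    assume "ssteps L a (Op p (vs @ Blame l # es))" then show ?thesis using G_B[OF _ st] by auto
  next
    assume "\<exists>es'. a = Op p es' \<and> list_all2 (Re L 0) es' (vs @ Blame l # es)"
    then obtain avs ae aes where a: "a = Op p (avs @ ae # aes)" "list_all2 (Re L 0) avs vs"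
      "Re L 0 ae (Blame l)" by (auto dest!: list_all2_split2)
    obtain avs' where avs: "list_all2 (ssteps L) avs avs'" "\<forall>v\<in>set avs'. is_value v"
      using list_MV[OF a(2) B_op(1)] by blast
    have "ssteps L a (Op p ([] @ avs' @ (ae # aes)))" unfolding a(1)
      using ss_op_list[OF avs(1) avs(2), of "[]" p "ae # aes"] by simp
    moreover have "ssteps L (Op p (avs' @ ae # aes)) (Op p (avs' @ Blame l # aes))"
      by (rule ss_op[OF Re0R_Blame[OF a(3)] avs(2)])
    moreover have "sstep L (Op p (avs' @ Blame l # aes)) (Blame l)" using avs(2) by (rule sstep.B_op)
    ultimately have "ssteps L a (Blame l)" by (simp add: rtranclp.rtrancl_into_rtrancl)
    then show ?thesis by (auto intro: R_blame)
  qed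
next
  case (B_appL l e2)
  have st: "sstep L (App (Blame l) e2) (Blame l)" by (rule sstep.B_appL)
  from B_appL(1) show ?case
  proof (rule Re0R_App[THEN disjE])
    assume "ssteps L a (App (Blame l) e2)" then show ?thesis using G_B[OF _ st] by auto
  next
    assume "\<exists>x' y'. a = App x' y' \<and> Re L 0 x' (Blame l) \<and> Re L 0 y' e2"
    then obtain x y where a: "a = App x y" "Re L 0 x (Blame l)" by blast
    have "ssteps L a (App (Blame l) y)" unfolding a(1) by (rule ss_appL[OF Re0R_Blame[OF a(2)]])
    then have "ssteps L a (Blame l)" by (simp add: rtranclp.rtrancl_into_rtrancl sstep.B_appL)
    then show ?thesis by (auto intro: R_blame)
  qed
next
  case (B_appR v l)
  have st: "sstep L (App v (Blame l)) (Blame l)" using B_appR(1) by (rule sstep.B_appR)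
  from B_appR(2) show ?case
  proof (rule Re0R_App[THEN disjE])
    assume "ssteps L a (App v (Blame l))" then show ?thesis using G_B[OF _ st] by auto
  next
    assume "\<exists>x' y'. a = App x' y' \<and> Re L 0 x' v \<and> Re L 0 y' (Blame l)"
    then obtain x y where a: "a = App x y" "Re L 0 x v" "Re L 0 y (Blame l)" by blast
    obtain x' where x: "ssteps L x x'" "is_value x'" using Re0R_val[OF a(2) B_appR(1)] by blast
    have "ssteps L a (App x' (Blame l))" unfolding a(1)
      using ss_appL[OF x(1)] ss_appR[OF Re0R_Blame[OF a(3)] x(2)] by (rule ss_trans3)
    then have "ssteps L a (Blame l)" using x(2) by (simp add: rtranclp.rtrancl_into_rtrancl sstep.B_appR)
    then show ?thesis by (auto intro: R_blame)
  qed
next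
  case (B_tapp l T)
  have st: "sstep L (TApp (Blame l) T) (Blame l)" by (rule sstep.B_tapp)
  from B_tapp(1) show ?case
  proof (rule Re0R_TApp[THEN disjE])
    assume "ssteps L a (TApp (Blame l) T)" then show ?thesis using G_B[OF _ st] by auto
  next
    assume "\<exists>x' T'. a = TApp x' T' \<and> Re L 0 x' (Blame l) \<and> Rt L 0 T' T"
    then obtain x T' where a: "a = TApp x T'" "Re L 0 x (Blame l)" by blast
    have "ssteps L a (TApp (Blame l) T')" unfolding a(1) by (rule ss_tapp[OF Re0R_Blame[OF a(2)]])
    then have "ssteps L a (Blame l)" by (simp add: rtranclp.rtrancl_into_rtrancl sstep.B_tapp)
    then show ?thesis by (auto intro: R_blame)
  qed
next
  case (B_wait T p l l')
  have st: "sstep L (Wait T p (Blame l) l') (Blame l)" by (rule sstep.B_wait)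
  from B_wait(1) show ?case
  proof (rule Re0R_Wait[THEN disjE])
    assume "ssteps L a (Wait T p (Blame l) l')" then show ?thesis using G_B[OF _ st] by auto
  next
    assume "\<exists>T' e2 x'. a = Wait T' e2 x' l' \<and> Rt L 0 T' T \<and> Re L 1 e2 p \<and> Re L 0 x' (Blame l)"
    then obtain T' p' x where a: "a = Wait T' p' x l'" "Re L 0 x (Blame l)" by blast
    have "ssteps L a (Wait T' p' (Blame l) l')" unfolding a(1) by (rule ss_wait[OF Re0R_Blame[OF a(2)]])
    then have "ssteps L a (Blame l)" by (simp add: rtranclp.rtrancl_into_rtrancl sstep.B_wait)
    then show ?thesis by (auto intro: R_blame)
  qed
next
  case (B_act T p l v l')
  have st: "sstep L (Act T p (Blame l) v l') (Blame l)" by (rule sstep.B_act)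
  from B_act(1) show ?case
  proof (rule Re0R_Act[THEN disjE])
    assume "ssteps L a (Act T p (Blame l) v l')" then show ?thesis using G_B[OF _ st] by auto
  next
    assume "\<exists>T' e2 x' v'. a = Act T' e2 x' v' l' \<and> Rt L 0 T' T \<and> Re L 1 e2 p \<and> Re L 0 x' (Blame l) \<and> Re L 0 v' v"
    then obtain T' p' x v' where a: "a = Act T' p' x v' l'" "Re L 0 x (Blame l)" by blast
    have "ssteps L a (Act T' p' (Blame l) v' l')" unfolding a(1) by (rule ss_act[OF Re0R_Blame[OF a(2)]])
    then have "ssteps L a (Blame l)" by (simp add: rtranclp.rtrancl_into_rtrancl sstep.B_act)
    then show ?thesis by (auto intro: R_blame)
  qed
qed

lemma coterm_A: "ssteps L a c \<Longrightarrow> lang_ok L \<Longrightarrow> Re L 0 a b \<Longrightarrow> c = Const k \<Longrightarrow> ssteps L b (Const k)"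
proof (induct arbitrary: b rule: converse_rtranclp_induct)
  case base then show ?case by (auto dest: Re_Const)
next
  case (step a a1)
  obtain b1 where "ssteps L b b1" "Re L 0 a1 b1" using SimA[OF step(1) step(4) step(5)] by blast
  then show ?case using step(3)[OF step(4) _ step(6)] by (meson rtranclp_trans)
qed

lemma coterm_B: "ssteps L b c \<Longrightarrow> Re L 0 a b \<Longrightarrow> c = Const k \<Longrightarrow> ssteps L a (Const k)"
proof (induct arbitrary: a rule: converse_rtranclp_induct)
  case base then show ?case by (auto dest: Re0R_Const)
next
  case (step b b1)
  obtain a1 where "ssteps L a a1" "Re L 0 a1 b1" using SimB[OF step(1) step(4)] by blast
  then show ?case using step(3)[OF _ step(5)] by (meson rtranclp_trans)
qed

lemma coterm: "lang_ok L \<Longrightarrow> Re L 0 a b \<Longrightarrow> ssteps L a (Const k) = ssteps L b (Const k)"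
  using coterm_A coterm_B by metis


fun passesS :: "('b,'k,'o,'l) lang \<Rightarrow> 'k \<Rightarrow> ('b,'k,'o,'l) ty \<Rightarrow> bool" where
  "passesS L k (TBase B) = True"
| "passesS L k (TRef T p) = (passesS L k T \<and> ssteps L (substE 0 (Const k) p) (Const (ktrue L)))"
| "passesS L k _ = False"

lemma passesS_Rt0:
  shows "Rt L n T T' \<Longrightarrow> n = 0 \<Longrightarrow> lang_ok L \<Longrightarrow> passesS L k T = passesS L k T'"
    and "Re L n e e' \<Longrightarrow> True"
proof (induct rule: Rt_Re.inducts)
  case (R_ref n T T' p p')
  from R_ref(5) have n0: "n = 0" .
  have rp: "Re L (Suc 0) p p'" using R_ref(3) n0 by simp
  have "Re L 0 (substE 0 (Const k) p) (substE 0 (Const k) p')" by (rule R_subst0[OF rp R_const])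
  then have c: "ssteps L (substE 0 (Const k) p) (Const (ktrue L)) = ssteps L (substE 0 (Const k) p') (Const (ktrue L))"
    by (rule coterm[OF R_ref(6)])
  have i: "passesS L k T = passesS L k T'" by (rule R_ref(2)[OF n0 R_ref(6)])
  show ?case using c i by (simp only: passesS.simps)
qed simp_all

lemma passesS_Rt: "Rt L 0 T T' \<Longrightarrow> lang_ok L \<Longrightarrow> passesS L k T = passesS L k T'"
  using passesS_Rt0(1)[of L 0 T T' k] by simp

lemma plug_sstep: "ectx_ok E \<Longrightarrow> sstep L x y \<Longrightarrow> sstep L (plug E x) (plug E y)"
  by (induct E) (auto intro: sstep.intros)

lemma blame_ssteps: "ectx_ok E \<Longrightarrow> ssteps L (plug E (Blame l)) (Blame l)"
proof (induct E)
  case Hole then show ?case by simp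
next
  case (EOp p vs E es)
  then have "ssteps L (Op p (vs @ plug E (Blame l) # es)) (Op p (vs @ Blame l # es))" by (intro ss_op) auto
  moreover have "sstep L (Op p (vs @ Blame l # es)) (Blame l)" using EOp by (intro B_op) auto
  ultimately show ?case by (simp add: rtranclp.rtrancl_into_rtrancl)
next
  case (EAppL E e2)
  then show ?case using ss_appL[of L "plug E (Blame l)" "Blame l" e2] by (simp add: rtranclp.rtrancl_into_rtrancl B_appL)
next
  case (EAppR v E)
  then show ?case using ss_appR[of L "plug E (Blame l)" "Blame l" v] by (simp add: rtranclp.rtrancl_into_rtrancl B_appR)
next
  case (ETApp E T)
  then show ?case using ss_tapp[of L "plug E (Blame l)" "Blame l" T] by (simp add: rtranclp.rtrancl_into_rtrancl B_tapp)
next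
  case (EWait T e1 E l')
  then show ?case using ss_wait[of L "plug E (Blame l)" "Blame l" T e1 l'] by (simp add: rtranclp.rtrancl_into_rtrancl B_wait)
next
  case (EAct T e1 E v l')
  then show ?case using ss_act[of L "plug E (Blame l)" "Blame l" T e1 v l'] by (simp add: rtranclp.rtrancl_into_rtrancl B_act)
qed

lemma step_ssteps: "step L x y \<Longrightarrow> ssteps L x y"
  by (induct rule: step.induct) (auto intro: plug_sstep S_red blame_ssteps)

lemma steps_ssteps: "steps L x y \<Longrightarrow> ssteps L x y"
  by (induct rule: rtranclp_induct) (auto dest: step_ssteps)

lemma conv1_Rt: "conv1 L T1 T2 \<Longrightarrow> Rt L 0 T1 T2"
  unfolding conv1_def using R_of_subst(1) step_ssteps by (metis r_into_rtranclp)

lemma tyeq_passesS: "tyeq L T1 T2 \<Longrightarrow> lang_ok L \<Longrightarrow> passesS L k T1 = passesS L k T2"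
  unfolding tyeq_def
  by (induct rule: tranclp_induct) (auto dest!: conv1_Rt dest: passesS_Rt)


lemma ty_induct1:
  fixes T :: "('b,'k,'o,'l) ty" and e :: "('b,'k,'o,'l) tm"
  assumes "\<And>B. P (TBase B)" "\<And>a. P (TVar a)" "\<And>T1 T2. P (TArr T1 T2)" "\<And>T. P (TAll T)"
    "\<And>T e. P T \<Longrightarrow> P (TRef T e)"
  shows "P T" and "True"
  by (induct T and e rule: ty.induct tm.induct) (auto intro: assms)

lemma first_precheck: "sstep L (App (Cast (TBase B) (TRef T' p) l) v) Y \<Longrightarrow> is_value v \<Longrightarrow>
  Y = Wait T' p (App (Cast (TBase B) T' l) v) l"
  by (erule sstep.cases) (auto elim: red.cases dest: sstep_not_value)

lemma wait_anal0: "ssteps L x c \<Longrightarrow> x = Wait T p M l \<Longrightarrow> is_value c \<Longrightarrow>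
  \<exists>v. is_value v \<and> ssteps L M v \<and> ssteps L (Act T p (substE 0 v p) v l) c"
proof (induct arbitrary: M rule: converse_rtranclp_induct)
  case base then show ?case by simp
next
  case (step x y M)
  from step(1)[unfolded step(4)] show ?case
  proof (cases rule: sstep.cases)
    case (S_red)
    then show ?thesis using step by (auto elim!: red.cases)
  next
    case S_wait
    then obtain M' where y: "y = Wait T p M' l" and sM: "sstep L M M'" by auto
    obtain v where "is_value v" "ssteps L M' v" "ssteps L (Act T p (substE 0 v p) v l) c"
      using step(3)[OF y step(5)] by blast
    then show ?thesis using sM by (meson converse_rtranclp_into_rtranclp)
  next
    case (B_wait l1)
    then show ?thesis using step(2,5) by (auto dest: ssteps_blame)
  qed
qed

lemma wait_anal: "ssteps L (Wait T p M l) c \<Longrightarrow> is_value c \<Longrightarrow>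
  \<exists>v. is_value v \<and> ssteps L M v \<and> ssteps L (Act T p (substE 0 v p) v l) c"
  by (rule wait_anal0[OF _ refl])

lemma act_anal0: "ssteps L x c \<Longrightarrow> x = Act T p e v l \<Longrightarrow> is_value c \<Longrightarrow> is_value v \<Longrightarrow>
  ssteps L e (Const (ktrue L)) \<and> c = v"
proof (induct arbitrary: e rule: converse_rtranclp_induct)
  case base then show ?case by simp
next
  case (step x y e)
  from step(1)[unfolded step(4)] show ?case
  proof (cases rule: sstep.cases)
    case (S_red)
    then show ?thesis using step by (auto elim!: red.cases dest: ssteps_blame ssteps_value)
  next
    case S_act
    then obtain e' where y: "y = Act T p e' v l" and sM: "sstep L e e'" by auto
    have "ssteps L e' (Const (ktrue L)) \<and> c = v" using step(3)[OF y step(5,6)] .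
    then show ?thesis using sM by (meson converse_rtranclp_into_rtranclp)
  next
    case (B_act l1)
    then show ?thesis using step(2,5) by (auto dest: ssteps_blame)
  qed
qed

lemma act_anal: "ssteps L (Act T p e v l) c \<Longrightarrow> is_value c \<Longrightarrow> is_value v \<Longrightarrow>
  ssteps L e (Const (ktrue L)) \<and> c = v"
  by (rule act_anal0[OF _ refl])

lemma CA: "unref T = TBase B \<Longrightarrow> ssteps L (App (Cast (TBase B) T l) (Const k)) (Const k) \<Longrightarrow> passesS L k T"
proof (induct T rule: ty_induct1(1))
  case (5 T' p)
  from 5(3) obtain Y where s1: "sstep L (App (Cast (TBase B) (TRef T' p) l) (Const k)) Y" "ssteps L Y (Const k)"
    by (cases rule: converse_rtranclpE) auto
  have "Y = Wait T' p (App (Cast (TBase B) T' l) (Const k)) l" using first_precheck[OF s1(1)] by simp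
  then have "ssteps L (Wait T' p (App (Cast (TBase B) T' l) (Const k)) l) (Const k)" using s1(2) by simp
  from wait_anal[OF this] obtain v where v: "is_value v" "ssteps L (App (Cast (TBase B) T' l) (Const k)) v"
      "ssteps L (Act T' p (substE 0 v p) v l) (Const k)"
    by auto
  from act_anal[OF v(3) _ v(1)] have "ssteps L (substE 0 v p) (Const (ktrue L))" "Const k = v" by auto
  then show ?case using 5 v by auto
qed auto

lemma CA_rev: "passesS L k T \<Longrightarrow> unref T = TBase B \<Longrightarrow> ssteps L (App (Cast (TBase B) T l) (Const k)) (Const k)"
proof (induct T rule: ty_induct1(1))
  case (1 B')
  then show ?case by (auto intro!: r_into_rtranclp S_red red.intros)
next
  case (5 T' p)
  have "sstep L (App (Cast (TBase B) (TRef T' p) l) (Const k)) (Wait T' p (App (Cast (TBase B) T' l) (Const k)) l)"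
    by (auto intro!: S_red red.intros)
  moreover have "ssteps L (Wait T' p (App (Cast (TBase B) T' l) (Const k)) l) (Wait T' p (Const k) l)"
    using 5 by (auto intro: ss_wait)
  moreover have "sstep L (Wait T' p (Const k) l) (Act T' p (substE 0 (Const k) p) (Const k) l)"
    by (auto intro!: S_red red.intros)
  moreover have "ssteps L (Act T' p (substE 0 (Const k) p) (Const k) l) (Act T' p (Const (ktrue L)) (Const k) l)"
    using 5 by (auto intro: ss_act)
  moreover have "sstep L (Act T' p (Const (ktrue L)) (Const k) l) (Const k)"
    by (auto intro!: S_red red.intros)
  ultimately show ?case
    by (meson r_into_rtranclp[of "sstep L"] rtranclp_trans)
qed auto


primrec saneT :: "('b,'k,'o,'l) ty \<Rightarrow> bool" and saneE :: "('b,'k,'o,'l) tm \<Rightarrow> bool" where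
  "saneT (TBase B) = True"
| "saneT (TVar a) = True"
| "saneT (TArr T1 T2) = (saneT T1 \<and> saneT T2)"
| "saneT (TAll T) = saneT T"
| "saneT (TRef T e) = (saneT T \<and> saneE e)"
| "saneE (Var n) = True"
| "saneE (Const k) = True"
| "saneE (Op p es) = list_all saneE es"
| "saneE (Lam T e) = (saneT T \<and> saneE e)"
| "saneE (TLam e) = saneE e"
| "saneE (Cast T1 T2 l) = (saneT T1 \<and> saneT T2)"
| "saneE (App e1 e2) = (saneE e1 \<and> saneE e2)"
| "saneE (TApp e T) = (saneE e \<and> saneT T)"
| "saneE (Wait T e1 e2 l) = (saneT T \<and> saneE e1 \<and> saneE e2)"
| "saneE (Act T e1 e2 v l) = (saneT T \<and> saneE e1 \<and> saneE e2 \<and> saneE v \<and> is_value v)"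
| "saneE (Blame l) = True"


lemma sane_shift:
  fixes T :: "('b,'k,'o,'l) ty" and e :: "('b,'k,'o,'l) tm"
  shows "saneT T \<Longrightarrow> saneT (shiftT c d T)" "saneE e \<Longrightarrow> saneE (shiftE c d e)"
  by (induct T and e arbitrary: c and c rule: ty.induct tm.induct) (auto simp: list_all_iff)

lemma is_value_subst: "is_value v \<Longrightarrow> is_value (substE k s v)" "is_value v \<Longrightarrow> is_value (tsubstE k S v)"
  by (cases v; simp)+

lemma sane_subst:
  fixes T :: "('b,'k,'o,'l) ty" and e :: "('b,'k,'o,'l) tm"
  assumes s: "saneE s"
  shows "saneT T \<Longrightarrow> saneT (substT k s T)" "saneE e \<Longrightarrow> saneE (substE k s e)"
  by (induct T and e arbitrary: k and k rule: ty.induct tm.induct)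
     (auto simp: list_all_iff sane_shift s is_value_subst)

lemma sane_tsubst:
  fixes T :: "('b,'k,'o,'l) ty" and e :: "('b,'k,'o,'l) tm"
  assumes s: "saneT S"
  shows "saneT T \<Longrightarrow> saneT (tsubstT k S T)" "saneE e \<Longrightarrow> saneE (tsubstE k S e)"
  by (induct T and e arbitrary: k and k rule: ty.induct tm.induct)
     (auto simp: list_all_iff sane_shift s is_value_subst)

lemma red_sane: "red L x y \<Longrightarrow> saneE x \<Longrightarrow> saneE y"
  by (erule red.cases) (auto simp: sane_shift sane_subst sane_tsubst)

lemma sstep_sane: "sstep L x y \<Longrightarrow> saneE x \<Longrightarrow> saneE y"
  by (induct rule: sstep.induct) (auto dest: red_sane)

lemma ssteps_sane: "ssteps L x y \<Longrightarrow> saneE x \<Longrightarrow> saneE y"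
  by (induct rule: rtranclp_induct) (auto dest: sstep_sane)

lemma SS_step: "sstep L x y \<Longrightarrow> saneE x \<Longrightarrow>
  (\<exists>E r r'. ectx_ok E \<and> red L r r' \<and> x = plug E r \<and> y = plug E r') \<or> (\<exists>E l. ectx_ok E \<and> y = plug E (Blame l))"
proof (induct rule: sstep.induct)
  case (S_red e e')
  then show ?case by (intro disjI1 exI[of _ Hole]) auto
next
  case (S_op vs e e' p es)
  from S_op(3) S_op(4) have "(\<exists>E r r'. ectx_ok E \<and> red L r r' \<and> e = plug E r \<and> e' = plug E r') \<or>
    (\<exists>E l. ectx_ok E \<and> e' = plug E (Blame l))" by auto
  then show ?case
  proof
    assume "\<exists>E r r'. ectx_ok E \<and> red L r r' \<and> e = plug E r \<and> e' = plug E r'"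
    then obtain E r r' where "ectx_ok E" "red L r r'" "e = plug E r" "e' = plug E r'" by blast
    then show ?thesis using S_op(1) by (intro disjI1 exI[of _ "EOp p vs E es"]) auto
  next
    assume "\<exists>E l. ectx_ok E \<and> e' = plug E (Blame l)"
    then obtain E l where "ectx_ok E" "e' = plug E (Blame l)" by blast
    then show ?thesis using S_op(1) by (intro disjI2 exI[of _ "EOp p vs E es"]) auto
  qed
next
  case (S_appL e e' e2)
  from S_appL(2) S_appL(3) have "(\<exists>E r r'. ectx_ok E \<and> red L r r' \<and> e = plug E r \<and> e' = plug E r') \<or>
    (\<exists>E l. ectx_ok E \<and> e' = plug E (Blame l))" by auto
  then show ?case
  proof
    assume "\<exists>E r r'. ectx_ok E \<and> red L r r' \<and> e = plug E r \<and> e' = plug E r'"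
    then obtain E r r' where "ectx_ok E" "red L r r'" "e = plug E r" "e' = plug E r'" by blast
    then show ?thesis by (intro disjI1 exI[of _ "EAppL E e2"]) auto
  next
    assume "\<exists>E l. ectx_ok E \<and> e' = plug E (Blame l)"
    then obtain E l where "ectx_ok E" "e' = plug E (Blame l)" by blast
    then show ?thesis by (intro disjI2 exI[of _ "EAppL E e2"]) auto
  qed
next
  case (S_appR v e e')
  from S_appR(3) S_appR(4) have "(\<exists>E r r'. ectx_ok E \<and> red L r r' \<and> e = plug E r \<and> e' = plug E r') \<or>
    (\<exists>E l. ectx_ok E \<and> e' = plug E (Blame l))" by auto
  then show ?case
  proof
    assume "\<exists>E r r'. ectx_ok E \<and> red L r r' \<and> e = plug E r \<and> e' = plug E r'"
    then obtain E r r' where "ectx_ok E" "red L r r'" "e = plug E r" "e' = plug E r'" by blast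
    then show ?thesis using S_appR(1) by (intro disjI1 exI[of _ "EAppR v E"]) auto
  next
    assume "\<exists>E l. ectx_ok E \<and> e' = plug E (Blame l)"
    then obtain E l where "ectx_ok E" "e' = plug E (Blame l)" by blast
    then show ?thesis using S_appR(1) by (intro disjI2 exI[of _ "EAppR v E"]) auto
  qed
next
  case (S_tapp e e' T)
  from S_tapp(2) S_tapp(3) have "(\<exists>E r r'. ectx_ok E \<and> red L r r' \<and> e = plug E r \<and> e' = plug E r') \<or>
    (\<exists>E l. ectx_ok E \<and> e' = plug E (Blame l))" by auto
  then show ?case
  proof
    assume "\<exists>E r r'. ectx_ok E \<and> red L r r' \<and> e = plug E r \<and> e' = plug E r'"
    then obtain E r r' where "ectx_ok E" "red L r r'" "e = plug E r" "e' = plug E r'" by blast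
    then show ?thesis by (intro disjI1 exI[of _ "ETApp E T"]) auto
  next
    assume "\<exists>E l. ectx_ok E \<and> e' = plug E (Blame l)"
    then obtain E l where "ectx_ok E" "e' = plug E (Blame l)" by blast
    then show ?thesis by (intro disjI2 exI[of _ "ETApp E T"]) auto
  qed
next
  case (S_wait e e' T p l)
  from S_wait(2) S_wait(3) have "(\<exists>E r r'. ectx_ok E \<and> red L r r' \<and> e = plug E r \<and> e' = plug E r') \<or>
    (\<exists>E l. ectx_ok E \<and> e' = plug E (Blame l))" by auto
  then show ?case
  proof
    assume "\<exists>E r r'. ectx_ok E \<and> red L r r' \<and> e = plug E r \<and> e' = plug E r'"
    then obtain E r r' where "ectx_ok E" "red L r r'" "e = plug E r" "e' = plug E r'" by blast
    then show ?thesis by (intro disjI1 exI[of _ "EWait T p E l"]) auto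
  next
    assume "\<exists>E l. ectx_ok E \<and> e' = plug E (Blame l)"
    then obtain E l' where "ectx_ok E" "e' = plug E (Blame l')" by blast
    then show ?thesis by (intro disjI2 exI[of _ "EWait T p E l"]) auto
  qed
next
  case (S_act e e' T p v l)
  from S_act(2) S_act(3) have "(\<exists>E r r'. ectx_ok E \<and> red L r r' \<and> e = plug E r \<and> e' = plug E r') \<or>
    (\<exists>E l. ectx_ok E \<and> e' = plug E (Blame l))" by auto
  then show ?case
  proof
    assume "\<exists>E r r'. ectx_ok E \<and> red L r r' \<and> e = plug E r \<and> e' = plug E r'"
    then obtain E r r' where "ectx_ok E" "red L r r'" "e = plug E r" "e' = plug E r'" by blast
    then show ?thesis using S_act(3) by (intro disjI1 exI[of _ "EAct T p E v l"]) auto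
  next
    assume "\<exists>E l. ectx_ok E \<and> e' = plug E (Blame l)"
    then obtain E l' where "ectx_ok E" "e' = plug E (Blame l')" by blast
    then show ?thesis using S_act(3) by (intro disjI2 exI[of _ "EAct T p E v l"]) auto
  qed
qed (intro disjI2 exI[of _ Hole]; auto)+

lemma nf_unique: "ssteps L y a \<Longrightarrow> lang_ok L \<Longrightarrow> ssteps L y b \<Longrightarrow> (\<And>z. \<not> sstep L a z) \<Longrightarrow> (\<And>z. \<not> sstep L b z) \<Longrightarrow> a = b"
proof (induct arbitrary: b rule: converse_rtranclp_induct)
  case base then show ?case using ssteps_nf by metis
next
  case (step y y1)
  from step(5) show ?case
  proof (cases rule: converse_rtranclpE)
    case base then show ?thesis using step(1,7) by blast
  next
    case (step y2)
    then have "y2 = y1" using sstep_det \<open>sstep L y y1\<close> \<open>lang_ok L\<close> by metis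
    then show ?thesis using step \<open>\<And>b. lang_ok L \<Longrightarrow> ssteps L y1 b \<Longrightarrow> (\<And>z. \<not> sstep L a z) \<Longrightarrow> (\<And>z. \<not> sstep L b z) \<Longrightarrow> a = b\<close>
      \<open>lang_ok L\<close> \<open>\<And>z. \<not> sstep L a z\<close> \<open>\<And>z. \<not> sstep L b z\<close> by blast
  qed
qed

lemma sane_to_steps: "ssteps L x c \<Longrightarrow> lang_ok L \<Longrightarrow> saneE x \<Longrightarrow> is_value c \<Longrightarrow> steps L x c"
proof (induct rule: converse_rtranclp_induct)
  case base then show ?case by simp
next
  case (step x y)
  have sy: "saneE y" using sstep_sane step by blast
  from SS_step[OF step(1) step(5)] show ?case
  proof
    assume "\<exists>E r r'. ectx_ok E \<and> red L r r' \<and> x = plug E r \<and> y = plug E r'"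
    then have "step L x y" by (auto intro: step_red)
    then show ?thesis using step(3)[OF step(4) sy step(6)] by (meson converse_rtranclp_into_rtranclp)
  next
    assume "\<exists>E l. ectx_ok E \<and> y = plug E (Blame l)"
    then obtain E l where "ectx_ok E" "y = plug E (Blame l)" by blast
    then have "ssteps L y (Blame l)" using blame_ssteps[of E L l] by simp
    then have "c = Blame l" using nf_unique[OF step(2) step(4)] step(6) sstep_not_value sstep_not_blame by metis
    then show ?thesis using step(6) by simp
  qed
qed


definition ctx_sane :: "('b,'k,'o,'l) ctx \<Rightarrow> bool" where
  "ctx_sane G = (\<forall>T. EVar T \<in> set G \<longrightarrow> saneT T)"

lemma typ_sane0:
  shows "wfctx L G \<Longrightarrow> ctx_sane G" and "wfty L G T \<Longrightarrow> saneT T \<and> ctx_sane G"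
    and "has_type L G e T \<Longrightarrow> saneE e \<and> ctx_sane G"
  by (induct rule: wfctx_wfty_has_type.inducts) (auto simp: list_all_iff in_set_conv_nth ctx_sane_def)

lemma typ_sane: "wfty L G T \<Longrightarrow> saneT T" "has_type L G e T \<Longrightarrow> saneE e"
  using typ_sane0 by blast+

fun ukind :: "('b,'k,'o,'l) ty \<Rightarrow> nat" where
  "ukind (TBase B) = 0"
| "ukind (TArr a b) = 1"
| "ukind (TAll a) = 2"
| "ukind (TVar a) = 3"
| "ukind (TRef T e) = ukind T"

fun ubase :: "('b,'k,'o,'l) ty \<Rightarrow> 'b option" where
  "ubase (TBase B) = Some B"
| "ubase (TRef T e) = ubase T"
| "ubase _ = None"

lemma Rt_kind0:
  shows "Rt L n T T' \<Longrightarrow> ukind T = ukind T' \<and> ubase T = ubase T'"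
    and "Re L n e e' \<Longrightarrow> True"
  by (induct rule: Rt_Re.inducts) auto

lemma tyeq_kind: "tyeq L T1 T2 \<Longrightarrow> ukind T1 = ukind T2 \<and> ubase T1 = ubase T2"
  unfolding tyeq_def
  by (induct rule: tranclp_induct) (auto dest!: conv1_Rt dest: Rt_kind0(1))

lemma unref_base: "unref T = TBase B \<Longrightarrow> ukind T = 0 \<and> ubase T = Some B"
  by (induct T rule: ty_induct1(1)) auto

lemma ubase_unref: "ubase T = Some B \<Longrightarrow> unref T = TBase B"
  by (induct T rule: ty_induct1(1)) auto

lemma VT:
  shows "wfctx L G \<Longrightarrow> True" and "wfty L G T \<Longrightarrow> True"
    and "has_type L G e T \<Longrightarrow> lang_ok L \<Longrightarrow>
      (\<forall>k. e = Const k \<longrightarrow> ukind T = 0 \<and> ubase T = Some (cbase L k)) \<and>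
      (\<forall>T0 b. e = Lam T0 b \<longrightarrow> ukind T = 1) \<and> (\<forall>A B l. e = Cast A B l \<longrightarrow> ukind T = 1) \<and>
      (\<forall>b. e = TLam b \<longrightarrow> ukind T = 2)"
proof (induct rule: wfctx_wfty_has_type.inducts)
  case (t_const G k)
  then show ?case using unref_base[of "tyc L k" "cbase L k"] by (auto simp: lang_ok_def)
next
  case (t_conv G e T1 T2)
  then show ?case using tyeq_kind[OF \<open>tyeq L T1 T2\<close>] by auto
qed auto

lemma lang_ok_const: "lang_ok L \<Longrightarrow> unref (tyc L k) = TBase (cbase L k) \<and> wfty L [] (tyc L k) \<and>
  (\<forall>l. steps L (App (Cast (TBase (cbase L k)) (tyc L k) l) (Const k)) (Const k))"
  by (simp add: lang_ok_def)

lemma VC: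
  shows "wfctx L G \<Longrightarrow> True" and "wfty L G T \<Longrightarrow> True"
    and "has_type L G e T \<Longrightarrow> lang_ok L \<Longrightarrow> e = Const k \<Longrightarrow> passesS L k T \<and> saneT T"
proof (induct rule: wfctx_wfty_has_type.inducts)
  case (t_const G k')
  then have k: "k' = k" by simp
  from \<open>lang_ok L\<close> have u: "unref (tyc L k) = TBase (cbase L k)" "wfty L [] (tyc L k)"
    "steps L (App (Cast (TBase (cbase L k)) (tyc L k) undefined) (Const k)) (Const k)"
    using lang_ok_const[of L k] by auto
  then show ?case using k CA[OF u(1) steps_ssteps[OF u(3)]] typ_sane(1)[OF u(2)] by simp
next
  case (t_conv G e T1 T2)
  then show ?case using tyeq_passesS[OF \<open>tyeq L T1 T2\<close> \<open>lang_ok L\<close>] typ_sane(1)[OF \<open>wfty L [] T2\<close>] by auto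
next
  case (t_forget G v T e)
  then show ?case by auto
next
  case (t_exact G v T e)
  then show ?case using steps_ssteps[OF \<open>steps L (substE 0 v e) (Const (ktrue L))\<close>]
      typ_sane(1)[OF \<open>wfty L [] (TRef T e)\<close>] by auto
qed auto


fun ecomp :: "('b,'k,'o,'l) ectx \<Rightarrow> ('b,'k,'o,'l) ectx \<Rightarrow> ('b,'k,'o,'l) ectx" where
  "ecomp Hole E' = E'"
| "ecomp (EOp p vs E es) E' = EOp p vs (ecomp E E') es"
| "ecomp (EAppL E e2) E' = EAppL (ecomp E E') e2"
| "ecomp (EAppR v E) E' = EAppR v (ecomp E E')"
| "ecomp (ETApp E T) E' = ETApp (ecomp E E') T"
| "ecomp (EWait T e1 E l) E' = EWait T e1 (ecomp E E') l"
| "ecomp (EAct T e1 E v l) E' = EAct T e1 (ecomp E E') v l"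

lemma ecomp_props: "plug (ecomp E E') x = plug E (plug E' x)" "ectx_ok (ecomp E E') = (ectx_ok E \<and> ectx_ok E')"
  "E' \<noteq> Hole \<Longrightarrow> ecomp E E' \<noteq> Hole"
  by (induct E) auto

lemma step_lift: "step L x y \<Longrightarrow> ectx_ok E \<Longrightarrow> \<exists>y'. step L (plug E x) y'"
proof (induct rule: step.cases)
  case (step_red E0 e1 e2)
  then have "step L (plug (ecomp E E0) e1) (plug (ecomp E E0) e2)" by (intro step.step_red) (auto simp: ecomp_props)
  then show ?case using step_red by (auto simp: ecomp_props)
next
  case (step_blame E0 l)
  then have "step L (plug (ecomp E E0) (Blame l)) (Blame l)" by (intro step.step_blame) (auto simp: ecomp_props)
  then show ?case using step_blame by (auto simp: ecomp_props)
qed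

lemma blame_lift: "ectx_ok E \<Longrightarrow> E \<noteq> Hole \<Longrightarrow> \<exists>y'. step L (plug E (Blame l)) y'"
  by (auto intro: step_blame)

lemma red_step: "red L x y \<Longrightarrow> step L x y"
  using step_red[of Hole L x y] by simp

lemma wfty_nil_tvar: "wfty L [] (TVar a) \<Longrightarrow> False"
  by (cases rule: wfty.cases) auto

lemma CastInv:
  shows "wfctx L G \<Longrightarrow> True" and "wfty L G T \<Longrightarrow> True"
    and "has_type L G e T \<Longrightarrow> e = Cast A B l \<Longrightarrow> compat A B \<and> (wfty L G A \<or> wfty L [] A)"
  by (induct rule: wfctx_wfty_has_type.inducts) auto

lemma cast_progress:
  assumes w: "wfty L [] A" and c: "compat A B" and v: "is_value v"
  shows "\<exists>e'. red L (App (Cast A B l) v) e'"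
proof (cases "is_ref A")
  case True
  then obtain A1 e1 where "A = TRef A1 e1" by (cases A) auto
  then show ?thesis using v by (auto intro: red.intros)
next
  case False
  show ?thesis
  proof (cases "is_ref B")
    case True
    then obtain B1 e2 where "B = TRef B1 e2" by (cases B) auto
    then show ?thesis using v False by (auto intro: red.intros)
  next
    case nB: False
    from c show ?thesis
    proof (cases rule: compat.cases)
      case (2 a)
      then show ?thesis using w wfty_nil_tvar by blast
    qed (use False nB v in \<open>auto intro: red.intros\<close>)
  qed
qed


lemma kind_subst: "ukind (substT k s T) = ukind T \<and> ubase (substT k s T) = ubase T"
  by (induct T arbitrary: k rule: ty_induct1(1)) auto

lemma kind_msubst: "ukind (msubstT xs T) = ukind T \<and> ubase (msubstT xs T) = ubase T"
  by (induct xs T rule: msubstT.induct) (auto simp: kind_subst)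

lemma lang_ok_op4: "lang_ok L \<Longrightarrow> (\<forall>p Ts T0. tyop L p = (Ts, T0) \<longrightarrow>
        (\<forall>T\<in>set (T0 # Ts). \<exists>B. unref T = TBase B) \<and>
        (\<forall>l ks. length ks = length Ts \<longrightarrow>
           (let ok = (\<lambda>i. unref (Ts ! i) = TBase (cbase L (ks ! i)) \<and>
                       steps L (App (Cast (unref (Ts ! i)) (msubstT (map Const (take i ks)) (Ts ! i)) l)
                                    (Const (ks ! i))) (Const (ks ! i)))
            in ((\<forall>i < length ks. ok i) \<longrightarrow>
                  (\<exists>k. den L p ks = Some k \<and> unref T0 = TBase (cbase L k) \<and>
                       steps L (App (Cast (unref T0) (msubstT (map Const ks) T0) l) (Const k)) (Const k)))
             \<and> ((\<exists>i < length ks. \<not> ok i) \<longrightarrow> den L p ks = None))))"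
  unfolding lang_ok_def by blast

lemma lang_ok_op:
  assumes ok: "lang_ok L" and tp: "tyop L p = (Ts, T0)"
  shows "\<forall>T\<in>set Ts. \<exists>B. unref T = TBase B"
    and "length ks = length Ts \<Longrightarrow> (\<forall>i<length ks. unref (Ts ! i) = TBase (cbase L (ks ! i)) \<and>
      steps L (App (Cast (unref (Ts ! i)) (msubstT (map Const (take i ks)) (Ts ! i)) l) (Const (ks ! i))) (Const (ks ! i)))
    \<Longrightarrow> (\<exists>k. den L p ks = Some k)"
proof -
  note h = lang_ok_op4[OF ok, rule_format, OF tp]
  show "\<forall>T\<in>set Ts. \<exists>B. unref T = TBase B" using h by simp
  assume len: "length ks = length Ts" and oks: "\<forall>i<length ks. unref (Ts ! i) = TBase (cbase L (ks ! i)) \<and>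
      steps L (App (Cast (unref (Ts ! i)) (msubstT (map Const (take i ks)) (Ts ! i)) l) (Const (ks ! i))) (Const (ks ! i))"
  note h2 = conjunct2[OF h, rule_format, of ks l, OF len, unfolded Let_def]
  from conjunct1[OF h2] oks show "\<exists>k. den L p ks = Some k" by blast
qed

lemma value_kind0:
  assumes h: "has_type L G v T" and ok: "lang_ok L" and v: "is_value v" and k: "ukind T = 0"
  shows "\<exists>k. v = Const k \<and> ubase T = Some (cbase L k)"
proof -
  note vt = VT(3)[OF h ok]
  show ?thesis using vt v k by (cases v) auto
qed

lemma progress_op:
  assumes ok: "lang_ok L" and tp: "tyop L p = (Ts, T0)" and len: "length es = length Ts"
    and H: "\<forall>i<length es. has_type L [] (es!i) (msubstT (take i es) (Ts!i)) \<and>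
      ((\<exists>e'. step L (es!i) e') \<or> is_value (es!i) \<or> (\<exists>l. es!i = Blame l))"
  shows "\<exists>e'. step L (Op p es) e'"
proof (cases "\<exists>i. i < length es \<and> \<not> is_value (es!i)")
  case True
  then obtain i where i: "i < length es" "\<not> is_value (es!i)" "\<forall>j<i. \<not> (j < length es \<and> \<not> is_value (es!j))"
    using exists_least_iff[of "\<lambda>i. i < length es \<and> \<not> is_value (es!i)"] by blast
  define E where "E = EOp p (take i es) Hole (drop (Suc i) es)"
  have vals: "\<forall>v\<in>set (take i es). is_value v" using i by (auto simp: in_set_conv_nth)
  have Eok: "ectx_ok E" using vals by (simp add: E_def)
  have pl: "plug E x = Op p (take i es @ x # drop (Suc i) es)" for x by (simp add: E_def)
  have es: "Op p es = plug E (es!i)" using pl id_take_nth_drop[OF i(1)] by simp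
  have Hi: "(\<exists>e'. step L (es!i) e') \<or> is_value (es!i) \<or> (\<exists>l. es!i = Blame l)" using H i(1) by blast
  then have "(\<exists>e'. step L (es!i) e') \<or> (\<exists>l. es!i = Blame l)" using i(2) by blast
  then show ?thesis
  proof
    assume "\<exists>e'. step L (es!i) e'"
    then obtain e' where "step L (es!i) e'" by blast
    from step_lift[OF this Eok] show ?thesis unfolding es .
  next
    assume "\<exists>l. es!i = Blame l"
    then obtain l where l: "es!i = Blame l" by blast
    have "\<exists>y'. step L (plug E (Blame l)) y'" by (rule blame_lift[OF Eok]) (simp add: E_def)
    then show ?thesis using es l by simp
  qed
next
  case False
  have opf: "\<forall>T\<in>set Ts. \<exists>B. unref T = TBase B" using lang_ok_op(1)[OF ok tp] .
  have cst: "\<exists>k. es!i = Const k \<and> ubase (msubstT (take i es) (Ts!i)) = Some (cbase L k)" if il: "i < length es" for i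
  proof -
    have "Ts!i \<in> set Ts" using il len by simp
    then obtain B where "unref (Ts!i) = TBase B" using opf by blast
    then have "ukind (Ts!i) = 0" using unref_base by metis
    then have k0: "ukind (msubstT (take i es) (Ts!i)) = 0" using kind_msubst by metis
    have ty: "has_type L [] (es!i) (msubstT (take i es) (Ts!i))" using H il by blast
    have val: "is_value (es!i)" using False il by blast
    show ?thesis by (rule value_kind0[OF ty ok val k0])
  qed
  define ks where "ks = map (\<lambda>e. case e of Const k \<Rightarrow> k | _ \<Rightarrow> undefined) es"
  have esk: "es = map Const ks"
  proof (rule nth_equalityI)
    show "length es = length (map Const ks)" by (simp add: ks_def)
    fix i assume "i < length es"
    then obtain k where "es!i = Const k" using cst by blast
    then show "es ! i = map Const ks ! i" using \<open>i < length es\<close> by (simp add: ks_def)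
  qed
  have oki: "unref (Ts ! i) = TBase (cbase L (ks ! i)) \<and>
      steps L (App (Cast (unref (Ts ! i)) (msubstT (map Const (take i ks)) (Ts ! i)) undefined) (Const (ks ! i))) (Const (ks ! i))"
    if il: "i < length ks" for i
  proof -
    let ?T = "msubstT (map Const (take i ks)) (Ts ! i)"
    have il': "i < length es" using il esk by simp
    have ty0: "has_type L [] (es!i) (msubstT (take i es) (Ts!i))" using H il' by blast
    have ty: "has_type L [] (Const (ks!i)) ?T" using ty0 il by (simp add: esk take_map)
    obtain k where k: "es!i = Const k" "ubase (msubstT (take i es) (Ts!i)) = Some (cbase L k)" using cst[OF il'] by blast
    have kk: "k = ks!i" using k(1) il by (simp add: esk)
    have ub: "ubase ?T = Some (cbase L (ks!i))" using k(2) kk by (simp add: esk take_map)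
    then have u1: "unref ?T = TBase (cbase L (ks!i))" by (rule ubase_unref)
    have "ubase (Ts!i) = Some (cbase L (ks!i))" using ub kind_msubst by metis
    then have u2: "unref (Ts!i) = TBase (cbase L (ks!i))" by (rule ubase_unref)
    have pv: "passesS L (ks!i) ?T \<and> saneT ?T" using VC(3)[OF ty ok refl] .
    have ss: "ssteps L (App (Cast (TBase (cbase L (ks!i))) ?T undefined) (Const (ks!i))) (Const (ks!i))"
      using CA_rev[OF conjunct1[OF pv] u1] .
    have "saneE (App (Cast (TBase (cbase L (ks!i))) ?T undefined) (Const (ks!i)))" using pv by simp
    then have "steps L (App (Cast (TBase (cbase L (ks!i))) ?T undefined) (Const (ks!i))) (Const (ks!i))"
      using sane_to_steps[OF ss ok] by simp
    then show ?thesis using u2 by simp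
  qed
  have "length ks = length Ts" using esk len by simp
  then obtain k where "den L p ks = Some k" using lang_ok_op(2)[OF ok tp, of ks undefined] oki by blast
  then have "red L (Op p es) (Const k)" unfolding esk by (rule red.red_op)
  then show ?thesis using red_step by blast
qed


lemma frame_lift:
  "step L x y \<Longrightarrow> \<exists>y'. step L (App x e2) y'"
  "is_value v \<Longrightarrow> step L x y \<Longrightarrow> \<exists>y'. step L (App v x) y'"
  "step L x y \<Longrightarrow> \<exists>y'. step L (TApp x T) y'"
  "step L x y \<Longrightarrow> \<exists>y'. step L (Wait T p x l) y'"
  "is_value v \<Longrightarrow> step L x y \<Longrightarrow> \<exists>y'. step L (Act T p x v l) y'"
  using step_lift[of L x y "EAppL Hole e2"] step_lift[of L x y "EAppR v Hole"] step_lift[of L x y "ETApp Hole T"]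
    step_lift[of L x y "EWait T p Hole l"] step_lift[of L x y "EAct T p Hole v l"]
  by auto

lemma frame_blame:
  "\<exists>y'. step L (App (Blame l) e2) y'"
  "is_value v \<Longrightarrow> \<exists>y'. step L (App v (Blame l)) y'"
  "\<exists>y'. step L (TApp (Blame l) T) y'"
  "\<exists>y'. step L (Wait T p (Blame l) l') y'"
  "is_value v \<Longrightarrow> \<exists>y'. step L (Act T p (Blame l) v l') y'"
  using blame_lift[of "EAppL Hole e2" L l] blame_lift[of "EAppR v Hole" L l] blame_lift[of "ETApp Hole T" L l]
    blame_lift[of "EWait T p Hole l'" L l] blame_lift[of "EAct T p Hole v l'" L l]
  by auto

lemma progress0:
  shows "wfctx L G \<Longrightarrow> True" and "wfty L G T \<Longrightarrow> True"
    and "has_type L G e T \<Longrightarrow> lang_ok L \<Longrightarrow> G = [] \<Longrightarrow> (\<exists>e'. step L e e') \<or> is_value e \<or> (\<exists>l. e = Blame l)"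
proof (induct rule: wfctx_wfty_has_type.inducts)
  case (t_op G p Ts T0 es)
  have H: "\<forall>i<length es. has_type L [] (es!i) (msubstT (take i es) (Ts!i)) \<and>
      ((\<exists>e'. step L (es!i) e') \<or> is_value (es!i) \<or> (\<exists>l. es!i = Blame l))"
    using t_op(5) t_op(6) t_op(7) by auto
  have "\<exists>e'. step L (Op p es) e'" by (rule progress_op[OF t_op(6) t_op(3) t_op(4) H])
  then show ?case by blast
next
  case (t_app G e1 T1 T2 e2)
  from t_app(2)[OF t_app(7,8)] show ?case
  proof (elim disjE)
    assume "\<exists>e'. step L e1 e'"
    then obtain e' where "step L e1 e'" by blast
    then show ?thesis using frame_lift(1)[of L e1 e' e2] by auto
  next
    assume "\<exists>l. e1 = Blame l"
    then obtain l where "e1 = Blame l" by blast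
    then show ?thesis using frame_blame(1)[of L l e2] by auto
  next
    assume v1: "is_value e1"
    from t_app(4)[OF t_app(7,8)] show ?thesis
    proof (elim disjE)
      assume "\<exists>e'. step L e2 e'"
      then obtain e' where "step L e2 e'" by blast
      then show ?thesis using frame_lift(2)[OF v1, of L e2 e'] by auto
    next
      assume "\<exists>l. e2 = Blame l"
      then obtain l where "e2 = Blame l" by blast
      then show ?thesis using frame_blame(2)[OF v1, of L l] by auto
    next
      assume v2: "is_value e2"
      have vt: "ukind (TArr T1 T2) = 1" by simp
      have ty1: "has_type L [] e1 (TArr T1 T2)" using t_app(1,8) by simp
      note V = VT(3)[OF ty1 t_app(7)]
      show ?thesis
      proof (cases e1)
        case (Lam T e)
        then show ?thesis using red_step[OF red.red_beta[OF v2, of L T e]] by auto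
      next
        case (Cast A B l)
        have "compat A B \<and> (wfty L [] A \<or> wfty L [] A)" using CastInv(3)[OF ty1 Cast] by simp
        then obtain e' where "red L (App (Cast A B l) e2) e'" using cast_progress[OF _ _ v2, of L A B l] by blast
        then show ?thesis using Cast red_step by auto
      qed (use v1 V in auto)
    qed
  qed
next
  case (t_tapp G e T1 T2)
  from t_tapp(2)[OF t_tapp(5,6)] show ?case
  proof (elim disjE)
    assume "\<exists>e'. step L e e'"
    then obtain e' where "step L e e'" by blast
    then show ?thesis using frame_lift(3)[of L e e' T2] by auto
  next
    assume "\<exists>l. e = Blame l"
    then obtain l where "e = Blame l" by blast
    then show ?thesis using frame_blame(3)[of L l T2] by auto
  next
    assume v1: "is_value e"
    have ty1: "has_type L [] e (TAll T1)" using t_tapp(1,6) by simp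
    note V = VT(3)[OF ty1 t_tapp(5)]
    show ?thesis
    proof (cases e)
      case (TLam b)
      then show ?thesis using red_step[OF red.red_tbeta[of L b T2]] by auto
    qed (use v1 V in auto)
  qed
next
  case (t_wait G T1 e1 e2 l)
  from t_wait(4)[OF t_wait(5,6)] show ?case
  proof (elim disjE)
    assume "\<exists>e'. step L e2 e'"
    then obtain e' where "step L e2 e'" by blast
    then show ?thesis using frame_lift(4)[where T = T1 and p = e1 and l = l and L = L and x = e2 and y = e'] by auto
  next
    assume "\<exists>l'. e2 = Blame l'"
    then obtain l' where "e2 = Blame l'" by blast
    then show ?thesis using frame_blame(4)[where T = T1 and p = e1 and l = l' and l' = l and L = L] by auto
  next
    assume "is_value e2" then show ?thesis using red_step[OF red.red_check[of e2 L T1 e1 l]] by auto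
  qed
next
  case (t_act G T1 e1 v e2 l)
  from t_act(9)[OF t_act(11) refl] show ?case
  proof (elim disjE)
    assume "\<exists>e'. step L e2 e'"
    then obtain e' where "step L e2 e'" by blast
    then show ?thesis using frame_lift(5)[OF t_act(5), where T = T1 and p = e1 and l = l and L = L and x = e2 and y = e'] by auto
  next
    assume "\<exists>l'. e2 = Blame l'"
    then obtain l' where "e2 = Blame l'" by blast
    then show ?thesis using frame_blame(5)[OF t_act(5), where T = T1 and p = e1 and l = l' and l' = l and L = L] by auto
  next
    assume v2: "is_value e2"
    obtain k where k: "e2 = Const k" "ubase (TBase (boolB L)) = Some (cbase L k)"
      using value_kind0[OF t_act(8) t_act(11) v2] by auto
    then have "k = ktrue L \<or> k = kfalse L" using t_act(11) unfolding lang_ok_def by auto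
    then show ?thesis
    proof
      assume "k = ktrue L" then show ?thesis using k red_step[OF red.red_ok[of L T1 e1 v l]] by auto
    next
      assume "k = kfalse L" then show ?thesis using k red_step[OF red.red_fail[of L T1 e1 v l]] by auto
    qed
  qed
next
  case (t_conv G e T1 T2)
  then show ?case by simp
qed auto

theorem mainTheorem7:
  fixes L :: "('b,'k,'o,'l) lang" and e :: "('b,'k,'o,'l) tm" and T :: "('b,'k,'o,'l) ty"
  assumes "lang_ok L"
    and "has_type L [] e T"
  shows "(\<exists>e'. step L e e') \<or> is_value e \<or> (\<exists>l. e = Blame l)"
  using progress0(3)[OF assms(2) assms(1) refl] .

end
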